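(* Let $f=\frac1n\sum_{i=1}^n f_i$, where each $f_i:\mathbb{R}^d\to\mathbb{R}$ is differentiable, bounded below by $f_i^{\inf}$, and ${\bf L}_i$-matrix smooth with ${\bf L}_i\in\mathbb{S}^d_{++}$; assume $f\ge f^{\inf}$ and $f$ is ${\bf L}$-matrix smooth with ${\bf L}\in\mathbb{S}^d_+$. Let $\{{\bf T}_i^k\}$ be mutually independent random matrices with common distribution on $\mathbb{S}^d_+$ and $\mathbb{E}[{\bf T}_i^k]={\bf I}_d$, fix $x^0$, ${\bf D}\in\mathbb{S}^d_{++}$ and let $x^{k+1}=x^k-\frac1n\sum_i{\bf T}_i^k{\bf D}\nabla f_i(x^k)$. Let $\varepsilon>0$, $K\ge1$, $\Delta^{\inf}:=f^{\inf}-\frac1n\sum_if_i^{\inf}$, $\lambda'_{{\bf D}}:=\max_i\lambda_{\max}\big(\mathbb{E}[{\bf L}_i^{1/2}{\bf D}({\bf T}_i^k-{\bf I}_d){\bf L}({\bf T}_i^k-{\bf I}_d){\bf D}{\bf L}_i^{1/2}]\big)$. If $${\bf D}{\bf L}{\bf D}\preceq{\bf D},\qquad\lambda'_{{\bf D}}\le\frac nK,\qquad 4\Delta^{\inf}\lambda'_{{\bf D}}\le n\varepsilon^2\det({\bf D})^{1/d},\qquad K\ge\frac{12(f(x^0)-f^{\inf})}{\det({\bf D})^{1/d}\varepsilon^2},$$ then $\min_{0\le k\le K-1}\mathbb{E}\big[\|\nabla f(x^k)\|^2_{{\bf D}/\det({\bf D})^{1/d}}\big]\le\varepsilon^2$.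
   Context: A differentiable $g$ is ${\bf M}$-matrix smooth if $g(x)\le g(y)+\langle\nabla g(y),x-y\rangle+\frac12\langle{\bf M}(x-y),x-y\rangle$ for all $x,y$. $\mathbb{S}^d_{+}$/$\mathbb{S}^d_{++}$: symmetric positive semidefinite/definite matrices; $\|x\|_{{\bf Q}}^2:=\langle{\bf Q}x,x\rangle$. All expectations assumed finite. *)

theory Defs
  imports "HOL-Probability.Probability"
begin

definition psd :: "real^'d^'d \<Rightarrow> bool" where
  "psd A \<longleftrightarrow> transpose A = A \<and> (\<forall>x. 0 \<le> x \<bullet> (A *v x))"

definition pd :: "real^'d^'d \<Rightarrow> bool" where
  "pd A \<longleftrightarrow> transpose A = A \<and> (\<forall>x. x \<noteq> 0 \<longrightarrow> 0 < x \<bullet> (A *v x))"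

definition loewner_le :: "real^'d^'d \<Rightarrow> real^'d^'d \<Rightarrow> bool" where
  "loewner_le A B \<longleftrightarrow> psd (B - A)"

definition msqrt :: "real^'d^'d \<Rightarrow> real^'d^'d" where
  "msqrt A = (THE S. psd S \<and> S ** S = A)"

definition lambda_max :: "real^'d^'d \<Rightarrow> real" where
  "lambda_max A = Max {\<mu>. \<exists>v. v \<noteq> 0 \<and> A *v v = \<mu> *s v}"

definition matrix_smooth :: "real^'d^'d \<Rightarrow> (real^'d \<Rightarrow> real) \<Rightarrow> (real^'d \<Rightarrow> real^'d) \<Rightarrow> bool" where
  "matrix_smooth M g gradg \<longleftrightarrow>
     (\<forall>x y. g x \<le> g y + gradg y \<bullet> (x - y) + 1/2 * ((M *v (x - y)) \<bullet> (x - y)))"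

end

theory Submission
  imports Defs
begin

lemma dot_transpose: "(x::real^'n) \<bullet> (A *v y) = (transpose A *v x) \<bullet> y"
  by (metis dot_lmul_matrix vector_transpose_matrix transpose_transpose)

lemma sym_dot: "transpose A = A \<Longrightarrow> (x::real^'n) \<bullet> (A *v y) = y \<bullet> (A *v x)"
  by (metis dot_transpose inner_commute)

lemma aux_quad: "(b::real) \<ge> 0 \<Longrightarrow> 2 * (- a / (b + 1)) * a + (- a / (b + 1))^2 * b = - (a^2) * (b + 2) / (b + 1)^2"
proof -
  assume b: "b \<ge> 0"
  define d where "d = b + 1"
  have d: "d > 0" using b by (simp add: d_def)
  have 1: "2 * (- a / d) * a = (-2*a^2*d) / d^2" using d by (simp add: power2_eq_square)
  have 2: "(- a / d)^2 * b = (a^2*b) / d^2" by (simp add: power_divide)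
  have "2 * (- a / d) * a + (- a / d)^2 * b = (-2*a^2*d + a^2*b) / d^2"
    unfolding 1 2 by (simp add: add_divide_distrib diff_divide_distrib)
  also have "-2*a^2*d + a^2*b = - (a^2) * (b + 2)" by (simp add: d_def algebra_simps)
  finally show ?thesis by (simp add: d_def)
qed

lemma psd_form_zero:
  fixes C :: "real^'n^'n"
  assumes sym: "transpose C = C" and S: "subspace S"
    and nn: "\<And>x. x \<in> S \<Longrightarrow> 0 \<le> x \<bullet> (C *v x)"
    and v: "v \<in> S" "v \<bullet> (C *v v) = 0" and Cv: "C *v v \<in> S"
  shows "C *v v = 0"
proof -
  let ?w = "C *v v"
  let ?a = "?w \<bullet> (C *v v)" and ?b = "?w \<bullet> (C *v ?w)"
  have b0: "0 \<le> ?b" using nn Cv by auto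
  define t where "t = - ?a / (?b + 1)"
  have "v + t *\<^sub>R ?w \<in> S" using S v Cv by (simp add: subspace_add subspace_scale)
  hence "0 \<le> (v + t *\<^sub>R ?w) \<bullet> (C *v (v + t *\<^sub>R ?w))" by (rule nn)
  also have "\<dots> = v \<bullet> (C *v v) + 2 * t * ?a + t^2 * ?b"
    using sym_dot[OF sym, of v ?w]
    by (simp add: matrix_vector_right_distrib inner_add_left inner_add_right
        scalar_mult_eq_scaleR matrix_vector_mult_scaleR power2_eq_square algebra_simps)
  also have "\<dots> = - (?a^2) * (?b + 2) / (?b + 1)^2"
    using v(2) aux_quad[OF b0, of ?a] unfolding t_def by simp
  finally have "?a^2 * (?b + 2) / (?b + 1)^2 \<le> 0" by simp
  moreover have "0 < (?b + 2) / (?b + 1)^2" using b0 by simp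
  ultimately have "?a^2 \<le> 0"
    by (metis (no_types, lifting) mult_le_0_iff not_le times_divide_eq_right zero_le_power2 linorder_not_less order_antisym_conv)
  hence "?a = 0" by simp
  thus ?thesis by simp
qed

lemma mat_mulv: "mat c *v (x::real^'n) = c *\<^sub>R x"
proof -
  have "(\<Sum>j\<in>UNIV. (if i = j then c else 0) * x $ j) = c * x $ i" for i
  proof -
    have "(\<Sum>j\<in>UNIV. (if i = j then c else 0) * x $ j) = (\<Sum>j\<in>UNIV. if i = j then c * x $ j else 0)"
      by (rule sum.cong) auto
    thus ?thesis by simp
  qed
  thus ?thesis by (simp add: vec_eq_iff matrix_vector_mult_def mat_def)
qed

lemma transpose_diff: "transpose (A - B) = transpose A - (transpose B :: 'a::ab_group_add^'n^'n)"
  by (simp add: vec_eq_iff transpose_def)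

lemma transpose_add: "transpose (A + B) = transpose A + (transpose B :: 'a::ab_group_add^'n^'n)"
  by (simp add: vec_eq_iff transpose_def)

lemma rayleigh_sub:
  fixes B :: "real^'n^'n"
  assumes sym: "transpose B = B" and S: "subspace S" and inv: "\<And>x. x \<in> S \<Longrightarrow> B *v x \<in> S"
    and ne: "S \<noteq> {0}"
  shows "\<exists>v m. v \<in> S \<and> norm v = 1 \<and> B *v v = m *\<^sub>R v \<and> (\<forall>x\<in>S. x \<bullet> (B *v x) \<le> m * (x \<bullet> x))"
proof -
  let ?K = "S \<inter> sphere 0 1"
  have cK: "compact ?K" using S by (intro closed_Int_compact closed_subspace compact_sphere) auto
  obtain x0 where x0: "x0 \<in> S" "x0 \<noteq> 0" using ne S subspace_0 by blast
  have "(1 / norm x0) *\<^sub>R x0 \<in> ?K" using x0 S by (simp add: subspace_scale)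
  hence Kne: "?K \<noteq> {}" by blast
  have cont: "continuous_on ?K (\<lambda>x. x \<bullet> (B *v x))"
    by (intro continuous_intros)
  obtain v where v: "v \<in> ?K" and vmax: "\<And>y. y \<in> ?K \<Longrightarrow> y \<bullet> (B *v y) \<le> v \<bullet> (B *v v)"
    using continuous_attains_sup[OF cK Kne cont] by blast
  define m where "m = v \<bullet> (B *v v)"
  have bound: "x \<bullet> (B *v x) \<le> m * (x \<bullet> x)" if x: "x \<in> S" for x
  proof (cases "x = 0")
    case True thus ?thesis by simp
  next
    case False
    let ?y = "(1 / norm x) *\<^sub>R x"
    have "?y \<in> ?K" using x False S by (simp add: subspace_scale)
    hence 1: "?y \<bullet> (B *v ?y) \<le> m" using vmax m_def by blast
    have 2: "?y \<bullet> (B *v ?y) = (x \<bullet> (B *v x)) / (norm x)^2"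
      by (simp add: matrix_vector_mult_scaleR power2_eq_square)
    have 3: "x \<bullet> x = (norm x)^2" by (simp add: power2_norm_eq_inner)
    have 4: "(norm x)^2 > 0" using False by simp
    from 1 2 have "(x \<bullet> (B *v x)) / (norm x)^2 \<le> m" by simp
    with 4 have "x \<bullet> (B *v x) \<le> m * (norm x)^2" by (simp add: divide_le_eq)
    with 3 show ?thesis by simp
  qed
  define C where "C = mat m - B"
  have Cx: "C *v x = m *\<^sub>R x - B *v x" for x
    by (simp add: C_def matrix_vector_mult_diff_rdistrib mat_mulv)
  have Csym: "transpose C = C" by (simp add: C_def transpose_diff sym transpose_mat)
  have nn: "0 \<le> x \<bullet> (C *v x)" if "x \<in> S" for x
    using bound[OF that] by (simp add: Cx inner_diff_right)
  have vS: "v \<in> S" "norm v = 1" using v by auto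
  have "v \<bullet> (C *v v) = 0" using vS by (simp add: Cx inner_diff_right m_def dot_square_norm)
  moreover have "C *v v \<in> S" using vS S inv by (simp add: Cx subspace_diff subspace_scale)
  ultimately have "C *v v = 0" using psd_form_zero[OF Csym S nn] vS by blast
  hence "B *v v = m *\<^sub>R v" by (simp add: Cx)
  thus ?thesis using vS bound by blast
qed

lemma spectral_sub:
  fixes B :: "real^'n^'n"
  assumes sym: "transpose B = B"
  shows "subspace S \<Longrightarrow> (\<And>x. x \<in> S \<Longrightarrow> B *v x \<in> S) \<Longrightarrow>
    \<exists>E. E \<subseteq> S \<and> pairwise orthogonal E \<and> (\<forall>e\<in>E. norm e = 1 \<and> (\<exists>\<mu>. B *v e = \<mu> *\<^sub>R e)) \<and> S \<subseteq> span E"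
proof (induction "dim S" arbitrary: S rule: less_induct)
  case less
  show ?case
  proof (cases "S = {0}")
    case True
    thus ?thesis by (intro exI[of _ "{}"]) auto
  next
    case False
    obtain v m where v: "v \<in> S" "norm v = 1" "B *v v = m *\<^sub>R v"
      using rayleigh_sub[OF sym less.prems(1) less.prems(2) False] by blast
    define S' where "S' = S \<inter> {x. orthogonal v x}"
    have sub': "subspace S'" unfolding S'_def
      using less.prems(1) subspace_orthogonal_to_vector[of v] by (metis subspace_inter Collect_cong)
    have inv': "B *v x \<in> S'" if "x \<in> S'" for x
    proof -
      have "v \<bullet> (B *v x) = x \<bullet> (B *v v)" by (rule sym_dot[OF sym])
      also have "\<dots> = m * (v \<bullet> x)" using v by (simp add: inner_commute)
      finally show ?thesis using that less.prems(2) by (auto simp: S'_def orthogonal_def)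
    qed
    have vv: "v \<bullet> v = 1" using v by (simp add: dot_square_norm)
    have "S' \<subseteq> S" by (auto simp: S'_def)
    moreover have "v \<notin> S'" using vv by (auto simp: S'_def orthogonal_def)
    ultimately have "span S' \<subset> span S"
    proof -
      have a: "span S' = S'" "span S = S" using sub' less.prems(1) by (simp_all add: span_eq_iff)
      show ?thesis unfolding a using \<open>S' \<subseteq> S\<close> \<open>v \<notin> S'\<close> v(1) by blast
    qed
    hence "dim S' < dim S" by (rule dim_psubset)
    from less.hyps[OF this sub' inv'] obtain E' where E': "E' \<subseteq> S'" "pairwise orthogonal E'"
      "\<forall>e\<in>E'. norm e = 1 \<and> (\<exists>\<mu>. B *v e = \<mu> *\<^sub>R e)" "S' \<subseteq> span E'" by blast
    show ?thesis
    proof (intro exI[of _ "insert v E'"] conjI)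
      show "insert v E' \<subseteq> S" using E'(1) v(1) by (auto simp: S'_def)
      show "pairwise orthogonal (insert v E')"
        using E'(1,2) by (auto simp: pairwise_insert S'_def orthogonal_commute)
      show "\<forall>e\<in>insert v E'. norm e = 1 \<and> (\<exists>\<mu>. B *v e = \<mu> *\<^sub>R e)" using E'(3) v by auto
      show "S \<subseteq> span (insert v E')"
      proof
        fix x assume x: "x \<in> S"
        have "x - (v \<bullet> x) *\<^sub>R v \<in> S'"
          using x v(1) less.prems(1) vv
          by (auto simp: S'_def orthogonal_def inner_diff_right subspace_diff subspace_scale)
        hence "x - (v \<bullet> x) *\<^sub>R v \<in> span (insert v E')"
          using E'(4) span_mono[of E' "insert v E'"] by auto
        moreover have "(v \<bullet> x) *\<^sub>R v \<in> span (insert v E')" by (simp add: span_base span_scale)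
        ultimately have "(x - (v \<bullet> x) *\<^sub>R v) + (v \<bullet> x) *\<^sub>R v \<in> span (insert v E')"
          by (rule span_add)
        thus "x \<in> span (insert v E')" by simp
      qed
    qed
  qed
qed

lemma spectral:
  fixes B :: "real^'n^'n"
  assumes sym: "transpose B = B"
  shows "\<exists>E. finite E \<and> pairwise orthogonal E \<and> (\<forall>e\<in>E. norm e = 1 \<and> (\<exists>\<mu>. B *v e = \<mu> *\<^sub>R e)) \<and> span E = UNIV"
proof -
  obtain E where E: "pairwise orthogonal E" "\<forall>e\<in>E. norm e = 1 \<and> (\<exists>\<mu>. B *v e = \<mu> *\<^sub>R e)" "UNIV \<subseteq> span E"
    using spectral_sub[OF sym, of UNIV] by auto
  have "0 \<notin> E" using E(2) by force
  hence "independent E" using E(1) pairwise_orthogonal_independent by blast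
  hence "finite E" by (rule independent_imp_finite)
  thus ?thesis using E by auto
qed

lemma sqrt_eig:
  fixes S A :: "real^'n^'n"
  assumes S: "psd S" and SS: "S ** S = A" and v: "A *v v = \<alpha> *\<^sub>R v"
  shows "S *v v = sqrt \<alpha> *\<^sub>R v"
proof (cases "v = 0")
  case True thus ?thesis by simp
next
  case False
  have Ssym: "transpose S = S" and Snn: "\<And>x. 0 \<le> x \<bullet> (S *v x)" using S by (auto simp: psd_def)
  have SSv: "S *v (S *v x) = A *v x" for x using SS by (simp add: matrix_vector_mul_assoc)
  have sq: "x \<bullet> (A *v x) = (S *v x) \<bullet> (S *v x)" for x
    using dot_transpose[of x S "S *v x"] Ssym SSv[of x] by simp
  have "\<alpha> * (v \<bullet> v) = v \<bullet> (A *v v)" using v by simp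
  also have "\<dots> \<ge> 0" unfolding sq by simp
  finally have "\<alpha> * (v \<bullet> v) \<ge> 0" .
  moreover have "v \<bullet> v > 0" using False by simp
  ultimately have a0: "\<alpha> \<ge> 0" by (simp add: zero_le_mult_iff)
  define r where "r = sqrt \<alpha>"
  have r0: "r \<ge> 0" and rr: "r * r = \<alpha>" using a0 by (auto simp: r_def)
  show ?thesis
  proof (cases "r = 0")
    case True
    hence "\<alpha> = 0" using rr by simp
    hence "(S *v v) \<bullet> (S *v v) = 0" using sq[of v] v by simp
    thus ?thesis using True r_def by simp
  next
    case False
    hence rpos: "r > 0" using r0 by simp
    define w where "w = S *v v - r *\<^sub>R v"
    have "S *v w = S *v (S *v v) - r *\<^sub>R (S *v v)"
      unfolding w_def by (simp add: matrix_vector_mult_diff_distrib matrix_vector_mult_scaleR)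
    also have "\<dots> = (r * r) *\<^sub>R v - r *\<^sub>R (S *v v)" using SSv[of v] v rr by simp
    also have "\<dots> = - r *\<^sub>R w" unfolding w_def by (simp add: scaleR_diff_right)
    finally have "S *v w = - r *\<^sub>R w" .
    hence "w \<bullet> (S *v w) = - r * (w \<bullet> w)" by simp
    moreover have "0 \<le> w \<bullet> (S *v w)" by (rule Snn)
    ultimately have "w \<bullet> w \<le> 0" using rpos by (simp add: mult_le_0_iff)
    hence "w = 0" by (metis inner_ge_zero inner_eq_zero_iff order_antisym)
    thus ?thesis by (simp add: w_def r_def)
  qed
qed

lemma outer_sum_mulv:
  fixes E :: "(real^'n) set"
  shows "(\<chi> i j. \<Sum>e\<in>E. c e * e$i * e$j) *v x = (\<Sum>e\<in>E. (c e * (e \<bullet> x)) *\<^sub>R e)"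
proof -
  have "(\<Sum>j\<in>UNIV. (\<Sum>e\<in>E. c e * e$i * e$j) * x$j) = (\<Sum>e\<in>E. c e * (\<Sum>j\<in>UNIV. e$j * x$j) * e$i)" for i
  proof -
    have "(\<Sum>j\<in>UNIV. (\<Sum>e\<in>E. c e * e$i * e$j) * x$j) = (\<Sum>j\<in>UNIV. \<Sum>e\<in>E. c e * e$i * e$j * x$j)"
      by (simp add: sum_distrib_right)
    also have "\<dots> = (\<Sum>e\<in>E. \<Sum>j\<in>UNIV. c e * e$i * e$j * x$j)" by (rule sum.swap)
    also have "\<dots> = (\<Sum>e\<in>E. c e * (\<Sum>j\<in>UNIV. e$j * x$j) * e$i)"
      by (rule sum.cong) (simp_all add: sum_distrib_left sum_distrib_right mult.commute mult.left_commute)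
    finally show ?thesis .
  qed
  thus ?thesis by (simp add: vec_eq_iff matrix_vector_mult_def inner_vec_def)
qed

lemma orth_sum_eval:
  fixes E :: "(real^'n) set"
  assumes fin: "finite E" and orth: "pairwise orthogonal E" and e: "e \<in> E" and n: "norm e = 1"
  shows "(\<Sum>e'\<in>E. (c e' * (e' \<bullet> e)) *\<^sub>R e') = c e *\<^sub>R e"
proof -
  have "(\<Sum>e'\<in>E. (c e' * (e' \<bullet> e)) *\<^sub>R e') = (\<Sum>e'\<in>E. if e' = e then c e *\<^sub>R e else 0)"
  proof (rule sum.cong)
    fix e' assume e': "e' \<in> E"
    show "(c e' * (e' \<bullet> e)) *\<^sub>R e' = (if e' = e then c e *\<^sub>R e else 0)"
    proof (cases "e' = e")
      case True thus ?thesis using n by (simp add: dot_square_norm)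
    next
      case False
      hence "e' \<bullet> e = 0" using orth e e' by (auto simp: pairwise_def orthogonal_def)
      thus ?thesis using False by simp
    qed
  qed simp
  also have "\<dots> = c e *\<^sub>R e" using fin e by simp
  finally show ?thesis .
qed

lemma psd_sqrt_exists:
  fixes A :: "real^'n^'n"
  assumes A: "psd A"
  shows "\<exists>R. psd R \<and> R ** R = A"
proof -
  have Asym: "transpose A = A" using A unfolding psd_def by blast
  obtain E where E: "finite E" "pairwise orthogonal E" "\<forall>e\<in>E. norm e = 1 \<and> (\<exists>\<mu>. A *v e = \<mu> *\<^sub>R e)"
    "span E = UNIV" using spectral[OF Asym] by (elim exE conjE) (rule that)
  define mu where "mu e = e \<bullet> (A *v e)" for e
  have eig: "A *v e = mu e *\<^sub>R e" if "e \<in> E" for e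
  proof -
    have "\<exists>m. A *v e = m *\<^sub>R e" using E(3) that by simp
    then obtain m where m: "A *v e = m *\<^sub>R e" by blast
    have "mu e = m" using m E(3) that by (simp add: mu_def dot_square_norm)
    thus ?thesis using m by simp
  qed
  have mu0: "mu e \<ge> 0" for e using A by (simp add: psd_def mu_def)
  define R where "R = (\<chi> i j. \<Sum>e\<in>E. sqrt (mu e) * e$i * e$j)"
  have Rx: "R *v x = (\<Sum>e\<in>E. (sqrt (mu e) * (e \<bullet> x)) *\<^sub>R e)" for x
    unfolding R_def by (rule outer_sum_mulv)
  have Re: "R *v e = sqrt (mu e) *\<^sub>R e" if "e \<in> E" for e
    unfolding Rx using orth_sum_eval[OF E(1) E(2) that, of "\<lambda>e. sqrt (mu e)"] E(3) that by simp
  have Rsym: "transpose R = R" unfolding R_def by (simp add: vec_eq_iff transpose_def ac_simps)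
  have Rnn: "0 \<le> x \<bullet> (R *v x)" for x
  proof -
    have "x \<bullet> (R *v x) = (\<Sum>e\<in>E. sqrt (mu e) * (e \<bullet> x)^2)"
      unfolding Rx by (simp add: inner_sum_right power2_eq_square inner_commute mult.assoc)
    also have "\<dots> \<ge> 0" by (intro sum_nonneg mult_nonneg_nonneg) (simp_all add: mu0)
    finally show ?thesis .
  qed
  have key: "(R ** R) *v e = A *v e" if e: "e \<in> E" for e
  proof -
    have "(R ** R) *v e = R *v (R *v e)" by (simp add: matrix_vector_mul_assoc)
    also have "\<dots> = (sqrt (mu e) * sqrt (mu e)) *\<^sub>R e" using e by (simp add: Re matrix_vector_mult_scaleR)
    also have "\<dots> = A *v e" using e mu0[of e] by (simp add: eig)
    finally show ?thesis .
  qed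
  have "(*v) (R ** R) x = (*v) A x" for x
    by (rule linear_eq_on_span[where B=E, OF matrix_vector_mul_linear matrix_vector_mul_linear])
       (auto simp: key E(4))
  hence "R ** R = A" by (simp add: matrix_eq)
  thus ?thesis using Rsym Rnn by (auto simp: psd_def)
qed

lemma psd_sqrt_unique:
  fixes A S1 S2 :: "real^'n^'n"
  assumes A: "psd A" and S1: "psd S1" "S1 ** S1 = A" and S2: "psd S2" "S2 ** S2 = A"
  shows "S1 = S2"
proof -
  have Asym: "transpose A = A" using A unfolding psd_def by blast
  obtain E where E: "finite E" "pairwise orthogonal E" "\<forall>e\<in>E. norm e = 1 \<and> (\<exists>\<mu>. A *v e = \<mu> *\<^sub>R e)"
    "span E = UNIV" using spectral[OF Asym] by (elim exE conjE) (rule that)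
  have key: "S1 *v e = S2 *v e" if e: "e \<in> E" for e
  proof -
    have "\<exists>m. A *v e = m *\<^sub>R e" using E(3) e by simp
    then obtain m where m: "A *v e = m *\<^sub>R e" by blast
    show ?thesis using sqrt_eig[OF S1 m] sqrt_eig[OF S2 m] by simp
  qed
  have "(*v) S1 x = (*v) S2 x" for x
    by (rule linear_eq_on_span[where B=E, OF matrix_vector_mul_linear matrix_vector_mul_linear])
       (auto simp: key E(4))
  thus ?thesis by (simp add: matrix_eq)
qed

lemma msqrt:
  fixes A :: "real^'n^'n"
  assumes A: "psd A"
  shows "psd (msqrt A)" "msqrt A ** msqrt A = A"
proof -
  have "\<exists>!S. psd S \<and> S ** S = A"
    using psd_sqrt_exists[OF A] psd_sqrt_unique[OF A] by blast
  hence "psd (msqrt A) \<and> msqrt A ** msqrt A = A" unfolding msqrt_def by (rule theI')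
  thus "psd (msqrt A)" "msqrt A ** msqrt A = A" by auto
qed

lemma lambda_max_props:
  fixes B :: "real^'n^'n"
  assumes sym: "transpose B = B"
  shows "\<exists>v. norm v = 1 \<and> B *v v = lambda_max B *\<^sub>R v \<and> (\<forall>x. x \<bullet> (B *v x) \<le> lambda_max B * (x \<bullet> x))"
proof -
  obtain i :: 'n where True by blast
  have ne: "(UNIV :: (real^'n) set) \<noteq> {0}"
  proof
    assume "(UNIV :: (real^'n) set) = {0}"
    hence "axis i (1::real) = 0" by blast
    thus False by (simp add: axis_eq_0_iff)
  qed
  obtain v m where v: "norm v = 1" "B *v v = m *\<^sub>R v" and bd: "\<forall>x. x \<bullet> (B *v x) \<le> m * (x \<bullet> x)"
    using rayleigh_sub[OF sym subspace_UNIV _ ne] by auto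
  define Eig where "Eig = {\<mu>. \<exists>v. v \<noteq> 0 \<and> B *v v = \<mu> *s v}"
  have "v \<noteq> 0" using v by auto
  hence mE: "m \<in> Eig" using v by (auto simp: Eig_def scalar_mult_eq_scaleR)
  have le: "\<mu> \<le> m" if mu: "\<mu> \<in> Eig" for \<mu>
  proof -
    obtain w where w: "w \<noteq> 0" "B *v w = \<mu> *\<^sub>R w" using mu by (auto simp: Eig_def scalar_mult_eq_scaleR)
    have "\<mu> * (w \<bullet> w) = w \<bullet> (B *v w)" using w by simp
    also have "\<dots> \<le> m * (w \<bullet> w)" using bd by blast
    finally show ?thesis using w(1) by simp
  qed
  define ev where "ev \<mu> = (SOME w. w \<noteq> 0 \<and> B *v w = \<mu> *\<^sub>R w)" for \<mu>
  have ev: "ev \<mu> \<noteq> 0 \<and> B *v ev \<mu> = \<mu> *\<^sub>R ev \<mu>" if "\<mu> \<in> Eig" for \<mu>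
  proof -
    have "\<exists>w. w \<noteq> 0 \<and> B *v w = \<mu> *\<^sub>R w" using that by (auto simp: Eig_def scalar_mult_eq_scaleR)
    thus ?thesis unfolding ev_def by (rule someI_ex)
  qed
  have inj: "inj_on ev Eig"
  proof (rule inj_onI)
    fix a b assume a: "a \<in> Eig" and b: "b \<in> Eig" and e: "ev a = ev b"
    have "a *\<^sub>R ev a = b *\<^sub>R ev a" using ev[OF a] ev[OF b] e by metis
    thus "a = b" using ev[OF a] by simp
  qed
  have orth: "pairwise orthogonal (ev ` Eig)"
  proof (rule pairwiseI, clarify)
    fix a b assume a: "a \<in> Eig" and b: "b \<in> Eig" and ne: "ev a \<noteq> ev b"
    hence ab: "a \<noteq> b" by blast
    have "a * (ev b \<bullet> ev a) = ev b \<bullet> (B *v ev a)" using ev[OF a] by simp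
    also have "\<dots> = ev a \<bullet> (B *v ev b)" by (rule sym_dot[OF sym])
    also have "\<dots> = b * (ev b \<bullet> ev a)" using ev[OF b] by (simp add: inner_commute)
    finally have "(a - b) * (ev b \<bullet> ev a) = 0" by (simp add: algebra_simps)
    thus "orthogonal (ev a) (ev b)" using ab by (simp add: orthogonal_def inner_commute)
  qed
  have "0 \<notin> ev ` Eig" using ev by auto
  hence "independent (ev ` Eig)" using orth pairwise_orthogonal_independent by blast
  hence "finite (ev ` Eig)" by (rule independent_imp_finite)
  hence fin: "finite Eig" using inj finite_imageD by blast
  have "lambda_max B = m" unfolding lambda_max_def Eig_def[symmetric]
    by (rule Max_eqI[OF fin]) (auto simp: le mE)
  thus ?thesis using v bd by auto
qed

lemma lambda_max_bound:
  fixes B :: "real^'n^'n"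
  assumes sym: "transpose B = B"
  shows "u \<bullet> (B *v u) \<le> lambda_max B * (u \<bullet> u)"
  using lambda_max_props[OF sym] by blast

lemma lambda_max_nonneg:
  fixes B :: "real^'n^'n"
  assumes sym: "transpose B = B" and nn: "\<And>x. 0 \<le> x \<bullet> (B *v x)"
  shows "0 \<le> lambda_max B"
proof -
  obtain v where v: "norm v = 1" "B *v v = lambda_max B *\<^sub>R v" using lambda_max_props[OF sym] by blast
  have "0 \<le> v \<bullet> (B *v v)" by (rule nn)
  also have "\<dots> = lambda_max B" using v by (simp add: dot_square_norm)
  finally show ?thesis .
qed


lemma pd_psd: "pd A \<Longrightarrow> psd A"
  unfolding pd_def psd_def by (metis inner_zero_left matrix_vector_mult_0_right order_le_less)

lemma pd_inj:
  fixes A :: "real^'n^'n"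
  assumes "pd A" shows "inj ((*v) A)"
proof (rule injI)
  fix x y assume e: "A *v x = A *v y"
  have "A *v (x - y) = 0" using e by (simp add: matrix_vector_mult_diff_distrib)
  hence "\<not> (0 < (x - y) \<bullet> (A *v (x - y)))" by simp
  thus "x = y" using assms unfolding pd_def by (metis eq_iff_diff_eq_0)
qed

lemma inj_invertible:
  fixes A :: "real^'n^'n"
  assumes "inj ((*v) A)" shows "invertible A"
proof -
  obtain B where "B ** A = mat 1" using assms matrix_left_invertible_injective by blast
  moreover hence "A ** B = mat 1" using matrix_left_right_inverse by blast
  ultimately show ?thesis unfolding invertible_def by blast
qed

lemma pd_solve:
  fixes A :: "real^'n^'n"
  assumes "pd A" shows "\<exists>w. A *v w = g"
proof -
  obtain B where "B ** A = mat 1" using pd_inj[OF assms] matrix_left_invertible_injective by blast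
  hence "A ** B = mat 1" using matrix_left_right_inverse by blast
  hence "A *v (B *v g) = g" by (simp add: matrix_vector_mul_assoc)
  thus ?thesis by blast
qed

lemma pd_det_pos:
  fixes D :: "real^'n^'n"
  assumes D: "pd D" shows "det D > 0"
proof (rule ccontr)
  assume "\<not> det D > 0" hence d1: "det D \<le> 0" by simp
  define M where "M t = (\<chi> i j. (1 - t) * (if i = j then 1 else 0) + t * D$i$j)" for t :: real
  have M1: "M 1 = D" by (simp add: M_def vec_eq_iff)
  have M0: "M 0 = mat 1" by (simp add: M_def vec_eq_iff mat_def)
  have Mx: "M t *v x = (1 - t) *\<^sub>R x + t *\<^sub>R (D *v x)" for t x
  proof -
    have "M t = (1 - t) *\<^sub>R mat 1 + t *\<^sub>R D" by (simp add: M_def vec_eq_iff mat_def)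
    thus ?thesis by (simp add: matrix_vector_mult_add_rdistrib scaleR_matrix_vector_assoc[symmetric])
  qed
  have cont: "continuous_on {0..1} (\<lambda>t. det (M t))"
    unfolding det_def M_def by (intro continuous_intros)
  obtain t where t: "0 \<le> t" "t \<le> 1" "det (M t) = 0"
    using IVT2'[of "\<lambda>t. det (M t)" 1 0 0] cont d1 M0 M1 by auto
  have "inj ((*v) (M t))"
  proof (rule injI)
    fix x y assume e: "M t *v x = M t *v y"
    have z: "M t *v (x - y) = 0" using e by (simp add: matrix_vector_mult_diff_distrib)
    show "x = y"
    proof (rule ccontr)
      assume "x \<noteq> y" hence nz: "x - y \<noteq> 0" by simp
      have "0 < (x - y) \<bullet> (M t *v (x - y))"
      proof (cases "t = 0")
        case True thus ?thesis using nz by (simp add: Mx)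
      next
        case False
        have "0 < (x - y) \<bullet> (D *v (x - y))" using D nz unfolding pd_def by blast
        moreover have "0 \<le> (1 - t) * ((x - y) \<bullet> (x - y))" using t by simp
        ultimately show ?thesis using False t by (simp add: Mx inner_add_right add_nonneg_pos)
      qed
      thus False using z by simp
    qed
  qed
  hence "det (M t) \<noteq> 0" using inj_invertible invertible_det_nz by blast
  thus False using t by simp
qed

lemma cont_mulv[continuous_intros]:
  fixes f :: "'a::topological_space \<Rightarrow> real^'n^'m" and g :: "'a \<Rightarrow> real^'n"
  shows "continuous_on S f \<Longrightarrow> continuous_on S g \<Longrightarrow> continuous_on S (\<lambda>x. f x *v g x)"
  unfolding matrix_vector_mult_def by (intro continuous_intros)

lemma cont_matmul[continuous_intros]:
  fixes f :: "'a::topological_space \<Rightarrow> real^'n^'m" and g :: "'a \<Rightarrow> real^'k^'n"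
  shows "continuous_on S f \<Longrightarrow> continuous_on S g \<Longrightarrow> continuous_on S (\<lambda>x. f x ** g x)"
  unfolding matrix_matrix_mult_def by (intro continuous_intros)

lemma meas_mulv[measurable (raw)]:
  fixes f :: "'a \<Rightarrow> real^'n^'m" and g :: "'a \<Rightarrow> real^'n"
  assumes "f \<in> borel_measurable M" "g \<in> borel_measurable M"
  shows "(\<lambda>x. f x *v g x) \<in> borel_measurable M"
  by (rule borel_measurable_continuous_Pair[OF assms]) (intro continuous_intros)

lemma meas_matmul[measurable (raw)]:
  fixes f :: "'a \<Rightarrow> real^'n^'m" and g :: "'a \<Rightarrow> real^'k^'n"
  assumes "f \<in> borel_measurable M" "g \<in> borel_measurable M"
  shows "(\<lambda>x. f x ** g x) \<in> borel_measurable M"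
  by (rule borel_measurable_continuous_Pair[OF assms]) (intro continuous_intros)

lemma grad_measurable:
  fixes F :: "real^'n \<Rightarrow> real" and G :: "real^'n \<Rightarrow> real^'n"
  assumes d: "\<And>y. (F has_derivative (\<lambda>h. G y \<bullet> h)) (at y)"
  shows "G \<in> borel_measurable borel"
proof -
  have Fc: "continuous_on UNIV F" using d
    by (meson continuous_at_imp_continuous_on has_derivative_continuous)
  have comp: "(\<lambda>y. G y $ j) \<in> borel_measurable borel" for j
  proof -
    let ?a = "axis j (1::real)"
    define u where "u m y = (F (y + (1 / real (Suc m)) *\<^sub>R ?a) - F y) / (1 / real (Suc m))" for m y
    show ?thesis
    proof (rule borel_measurable_LIMSEQ_real[where u=u])
    show "u m \<in> borel_measurable borel" for m
      unfolding u_def by (intro borel_measurable_continuous_onI continuous_intros Fc[THEN continuous_on_compose2]) auto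
    fix y :: "real^'n" assume "y \<in> space borel"
    have dd: "((\<lambda>t. F (y + t *\<^sub>R ?a)) has_derivative (\<lambda>t. G y \<bullet> (t *\<^sub>R ?a))) (at 0)"
    proof -
      have "((\<lambda>t. y + t *\<^sub>R ?a) has_derivative (\<lambda>t. t *\<^sub>R ?a)) (at 0)"
        by (intro derivative_eq_intros) auto
      from diff_chain_at[OF this, of F "\<lambda>h. G y \<bullet> h"] d[of y] show ?thesis by (simp add: o_def)
    qed
    have "(\<lambda>t. G y \<bullet> (t *\<^sub>R ?a)) = (*) (G y $ j)"
      by (auto simp: inner_axis fun_eq_iff mult.commute)
    hence "((\<lambda>t. F (y + t *\<^sub>R ?a)) has_real_derivative G y $ j) (at 0)"
      using dd by (simp add: has_field_derivative_def)
    hence lim: "((\<lambda>h. (F (y + h *\<^sub>R ?a) - F y) / h) \<longlongrightarrow> G y $ j) (at 0)"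
      using DERIV_def by (simp add: has_field_derivative_iff)
    have s: "filterlim (\<lambda>m. 1 / real (Suc m)) (at 0) sequentially"
      unfolding filterlim_at using LIMSEQ_Suc[OF lim_1_over_n] by auto
    show "(\<lambda>m. u m y) \<longlonglongrightarrow> G y $ j"
      unfolding u_def using filterlim_compose[OF lim s] by simp
  qed
  qed
  show ?thesis
  proof (rule borel_measurable_euclidean_space[THEN iffD2], intro ballI)
    fix b :: "real^'n" assume "b \<in> Basis"
    then obtain j where b: "b = axis j 1" by (auto simp: Basis_vec_def)
    show "(\<lambda>x. G x \<bullet> b) \<in> borel_measurable borel" unfolding b inner_axis using comp[of j] by simp
  qed
qed

lemma bl_form: "bounded_linear (\<lambda>A::real^'n^'m. a \<bullet> (A *v z))"
proof -
  have "linear (\<lambda>A::real^'n^'m. a \<bullet> (A *v z))"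
    by (rule linearI) (simp_all add: matrix_vector_mult_add_rdistrib inner_add_right scaleR_matrix_vector_assoc[symmetric])
  thus ?thesis by (simp add: linear_conv_bounded_linear)
qed

lemma mean_zero_lin:
  fixes Tm :: "'a \<Rightarrow> real^'n^'n"
  assumes P: "prob_space M" and int: "integrable M Tm" and mean: "integral\<^sup>L M Tm = mat 1"
  shows "integrable M (\<lambda>\<omega>. a \<bullet> ((Tm \<omega> - mat 1) *v z))"
    and "(\<integral>\<omega>. a \<bullet> ((Tm \<omega> - mat 1) *v z) \<partial>M) = 0"
proof -
  interpret prob_space M by (rule P)
  have eq: "a \<bullet> ((Tm \<omega> - mat 1) *v z) = a \<bullet> (Tm \<omega> *v z) - a \<bullet> z" for \<omega>
    by (simp add: matrix_vector_mult_diff_rdistrib inner_diff_right)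
  have i1: "integrable M (\<lambda>\<omega>. a \<bullet> (Tm \<omega> *v z))"
    by (rule integrable_bounded_linear[OF bl_form int])
  show "integrable M (\<lambda>\<omega>. a \<bullet> ((Tm \<omega> - mat 1) *v z))" unfolding eq using i1 by simp
  have "(\<integral>\<omega>. a \<bullet> (Tm \<omega> *v z) \<partial>M) = a \<bullet> (mat 1 *v z)"
    using integral_bounded_linear[OF bl_form int, of a z] mean by simp
  thus "(\<integral>\<omega>. a \<bullet> ((Tm \<omega> - mat 1) *v z) \<partial>M) = 0" unfolding eq
    using i1 by (simp add: prob_space)
qed

lemma inner_expand: "(L *v v) \<bullet> (w::real^'n) = (\<Sum>p\<in>UNIV. ((transpose L *v axis p 1) \<bullet> v) * (axis p 1 \<bullet> w))"
proof -
  have 1: "(L *v v) $ p = (transpose L *v axis p 1) \<bullet> v" for p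
    using dot_transpose[of "axis p 1" L v] by (simp add: inner_axis')
  have 2: "w $ p = axis p 1 \<bullet> w" for p by (simp add: inner_axis')
  have "(L *v v) \<bullet> w = (\<Sum>p\<in>UNIV. (L *v v)$p * w$p)" by (simp add: inner_vec_def)
  also have "\<dots> = (\<Sum>p\<in>UNIV. ((transpose L *v axis p 1) \<bullet> v) * (axis p 1 \<bullet> w))"
    by (rule sum.cong[OF refl]) (simp only: 1 2)
  finally show ?thesis .
qed

lemma cross_zero:
  fixes T1 T2 :: "'a \<Rightarrow> real^'n^'n"
  assumes P: "prob_space M" and ind: "prob_space.indep_var M borel T1 borel T2"
    and i1: "integrable M T1" and m1: "integral\<^sup>L M T1 = mat 1"
    and i2: "integrable M T2" and m2: "integral\<^sup>L M T2 = mat 1"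
  shows "integrable M (\<lambda>\<omega>. (L *v ((T1 \<omega> - mat 1) *v z1)) \<bullet> ((T2 \<omega> - mat 1) *v z2))"
    and "(\<integral>\<omega>. (L *v ((T1 \<omega> - mat 1) *v z1)) \<bullet> ((T2 \<omega> - mat 1) *v z2) \<partial>M) = 0"
proof -
  interpret prob_space M by (rule P)
  define X where "X = (\<lambda>p \<omega>. (transpose L *v axis p 1) \<bullet> ((T1 \<omega> - mat 1) *v z1))"
  define Y where "Y = (\<lambda>p \<omega>. (axis p 1) \<bullet> ((T2 \<omega> - mat 1) *v z2))"
  have eq: "(L *v ((T1 \<omega> - mat 1) *v z1)) \<bullet> ((T2 \<omega> - mat 1) *v z2) = (\<Sum>p\<in>UNIV. X p \<omega> * Y p \<omega>)" for \<omega>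
    unfolding X_def Y_def by (rule inner_expand)
  have iX: "integrable M (X p)" and eX: "integral\<^sup>L M (X p) = 0" for p
    unfolding X_def using mean_zero_lin[OF P i1 m1] by auto
  have iY: "integrable M (Y p)" and eY: "integral\<^sup>L M (Y p) = 0" for p
    unfolding Y_def using mean_zero_lin[OF P i2 m2] by auto
  have indp: "indep_var borel (X p) borel (Y p)" for p
  proof -
    have "indep_var borel ((\<lambda>A. (transpose L *v axis p 1) \<bullet> ((A - mat 1) *v z1)) \<circ> T1)
                     borel ((\<lambda>A. (axis p 1) \<bullet> ((A - mat 1) *v z2)) \<circ> T2)"
      by (rule indep_var_compose[OF ind]) (intro borel_measurable_continuous_onI continuous_intros)+
    thus ?thesis unfolding X_def Y_def o_def .
  qed
  have iXY: "integrable M (\<lambda>\<omega>. X p \<omega> * Y p \<omega>)" and eXY: "(\<integral>\<omega>. X p \<omega> * Y p \<omega> \<partial>M) = 0" for p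
    using indep_var_integrable[OF indp iX iY] indep_var_lebesgue_integral[OF indp iX iY] eX eY by auto
  show "integrable M (\<lambda>\<omega>. (L *v ((T1 \<omega> - mat 1) *v z1)) \<bullet> ((T2 \<omega> - mat 1) *v z2))"
    unfolding eq by (rule Bochner_Integration.integrable_sum) (rule iXY)
  show "(\<integral>\<omega>. (L *v ((T1 \<omega> - mat 1) *v z1)) \<bullet> ((T2 \<omega> - mat 1) *v z2) \<partial>M) = 0"
    unfolding eq using iXY eXY by (subst Bochner_Integration.integral_sum) auto
qed

lemma transpose_bl: "bounded_linear (transpose :: real^'n^'m \<Rightarrow> real^'m^'n)"
proof -
  have "linear (transpose :: real^'n^'m \<Rightarrow> real^'m^'n)"
    by (rule linearI) (simp_all add: vec_eq_iff transpose_def)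
  thus ?thesis by (simp add: linear_conv_bounded_linear)
qed

lemma transpose_meas[measurable]: "(transpose :: real^'n^'m \<Rightarrow> real^'m^'n) \<in> borel_measurable borel"
  by (rule borel_measurable_continuous_onI) (unfold transpose_def, intro continuous_intros)

lemma phi_quad:
  fixes A R D L :: "real^'n^'n"
  assumes A: "transpose A = A" and R: "transpose R = R" and D: "transpose D = D"
  shows "u \<bullet> ((R ** D ** (A - mat 1) ** L ** (A - mat 1) ** D ** R) *v u)
       = (L *v ((A - mat 1) *v (D *v (R *v u)))) \<bullet> ((A - mat 1) *v (D *v (R *v u)))"
proof -
  have A1: "transpose (A - mat 1) = A - mat 1" using A by (simp add: transpose_diff transpose_mat)
  let ?W = "(A - mat 1) *v (D *v (R *v u))"
  have "u \<bullet> ((R ** D ** (A - mat 1) ** L ** (A - mat 1) ** D ** R) *v u)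
      = u \<bullet> (R *v (D *v ((A - mat 1) *v (L *v ?W))))"
    by (simp add: matrix_vector_mul_assoc matrix_mul_assoc)
  also have "\<dots> = (R *v u) \<bullet> (D *v ((A - mat 1) *v (L *v ?W)))" using dot_transpose[of u R] R by simp
  also have "\<dots> = (D *v (R *v u)) \<bullet> ((A - mat 1) *v (L *v ?W))" using dot_transpose[of "R *v u" D] D by simp
  also have "\<dots> = ?W \<bullet> (L *v ?W)" using dot_transpose[of "D *v (R *v u)" "A - mat 1"] A1 by simp
  finally show ?thesis by (simp add: inner_commute)
qed

lemma quad_expand:
  fixes L :: "real^'n^'n"
  assumes "transpose L = L"
  shows "(L *v (m + e)) \<bullet> (m + e) = (L *v m) \<bullet> m + 2 * ((L *v m) \<bullet> e) + (L *v e) \<bullet> e"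
proof -
  have "(L *v e) \<bullet> m = (L *v m) \<bullet> e" using sym_dot[OF assms, of m e] by (simp add: inner_commute)
  thus ?thesis by (simp add: matrix_vector_right_distrib inner_add_left inner_add_right)
qed

lemma sum_quad:
  fixes L :: "real^'n^'n"
  shows "(L *v (c *\<^sub>R (\<Sum>i\<in>I. v i))) \<bullet> (c *\<^sub>R (\<Sum>j\<in>I. v j)) = c^2 * (\<Sum>i\<in>I. \<Sum>j\<in>I. (L *v v i) \<bullet> v j)"
  by (simp add: matrix_vector_mult_scaleR vec.sum inner_sum_left inner_sum_right power2_eq_square sum_distrib_left)
     (subst sum.swap, simp add: mult.assoc)

locale sgd =
  fixes n :: nat and fs :: "nat \<Rightarrow> real^'d \<Rightarrow> real" and g :: "nat \<Rightarrow> real^'d \<Rightarrow> real^'d"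
    and f :: "real^'d \<Rightarrow> real" and finf :: real and fsinf :: "nat \<Rightarrow> real"
    and Ls :: "nat \<Rightarrow> real^'d^'d" and L D :: "real^'d^'d"
    and M :: "'a measure" and \<mu> :: "(real^'d^'d) measure"
    and T :: "nat \<Rightarrow> nat \<Rightarrow> 'a \<Rightarrow> real^'d^'d"
    and x :: "nat \<Rightarrow> 'a \<Rightarrow> real^'d" and x0 :: "real^'d"
    and gradf :: "real^'d \<Rightarrow> real^'d"
  assumes n_pos: "n \<ge> 1"
    and f_def: "f = (\<lambda>y. (1 / real n) * (\<Sum>i<n. fs i y))"
    and gradf_def: "gradf = (\<lambda>y. (1 / real n) *\<^sub>R (\<Sum>i<n. g i y))"
    and grad: "\<And>i y. i < n \<Longrightarrow> (fs i has_derivative (\<lambda>h. g i y \<bullet> h)) (at y)"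
    and fi_lb: "\<And>i y. i < n \<Longrightarrow> fsinf i \<le> fs i y"
    and Li_pd: "\<And>i. i < n \<Longrightarrow> pd (Ls i)"
    and fi_smooth: "\<And>i. i < n \<Longrightarrow> matrix_smooth (Ls i) (fs i) (g i)"
    and f_lb: "\<And>y. finf \<le> f y"
    and L_psd: "psd L"
    and f_smooth: "matrix_smooth L f gradf"
    and prob: "prob_space M"
    and T_meas: "\<And>k i. i < n \<Longrightarrow> T k i \<in> borel_measurable M"
    and T_indep: "prob_space.indep_vars M (\<lambda>_. borel) (\<lambda>(k, i). T k i) (UNIV \<times> {..<n})"
    and T_distr: "\<And>k i. i < n \<Longrightarrow> distr M borel (T k i) = \<mu>"
    and T_psd: "\<And>k i. i < n \<Longrightarrow> AE \<omega> in M. psd (T k i \<omega>)"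
    and T_int: "\<And>k i. i < n \<Longrightarrow> integrable M (T k i)"
    and T_mean: "\<And>k i. i < n \<Longrightarrow> integral\<^sup>L M (T k i) = mat 1"
    and D_pd: "pd D"
    and x_0: "\<And>\<omega>. x 0 \<omega> = x0"
    and x_Suc: "\<And>k \<omega>. x (Suc k) \<omega> =
         x k \<omega> - (1 / real n) *\<^sub>R (\<Sum>i<n. T k i \<omega> *v (D *v g i (x k \<omega>)))"
    and int_lam: "\<And>i. i < n \<Longrightarrow> integrable \<mu> (\<lambda>A.
                 msqrt (Ls i) ** D ** (A - mat 1) ** L ** (A - mat 1) ** D ** msqrt (Ls i))"
    and DLD: "loewner_le (D ** L ** D) D"
begin

sublocale prob_space M by (rule prob)

definition "Phi i A = msqrt (Ls i) ** D ** (A - mat 1) ** L ** (A - mat 1) ** D ** msqrt (Ls i)"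
definition "Bm i = integral\<^sup>L \<mu> (Phi i)"
definition "lam i = lambda_max (Bm i)"
definition "lamD = Max (lam ` {..<n})"

lemma Dsym: "transpose D = D" using D_pd by (simp add: pd_def)
lemma Lsym: "transpose L = L" using L_psd by (simp add: psd_def)
lemma R_props:
  assumes "i < n"
  shows "psd (msqrt (Ls i))" "msqrt (Ls i) ** msqrt (Ls i) = Ls i" "transpose (msqrt (Ls i)) = msqrt (Ls i)"
  using msqrt[OF pd_psd[OF Li_pd[OF assms]]] by (auto simp: psd_def)

lemma Phi_cont: "continuous_on UNIV (Phi i)"
  unfolding Phi_def[abs_def] by (intro continuous_intros)

lemma Phi_meas[measurable]: "Phi i \<in> borel_measurable borel"
  by (rule borel_measurable_continuous_onI[OF Phi_cont])

lemma Tsym_AE: "i < n \<Longrightarrow> AE \<omega> in M. transpose (T k i \<omega>) = T k i \<omega>"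
  using T_psd[of i k] by (auto simp: psd_def elim!: AE_mp)

lemma Phi_int: "i < n \<Longrightarrow> integrable M (\<lambda>\<omega>. Phi i (T k i \<omega>))"
  using int_lam[of i] integrable_distr_eq[OF T_meas[of i k] Phi_meas, of i] T_distr[of i k]
  by (simp add: Phi_def[abs_def])

lemma Bm_eq: "i < n \<Longrightarrow> Bm i = (\<integral>\<omega>. Phi i (T k i \<omega>) \<partial>M)"
  unfolding Bm_def using integral_distr[OF T_meas[of i k] Phi_meas, of i] T_distr[of i k] by simp

lemma Phi_sym: "transpose A = A \<Longrightarrow> i < n \<Longrightarrow> transpose (Phi i A) = Phi i A"
  using R_props(3)[of i] Dsym Lsym
  by (simp add: Phi_def matrix_transpose_mul transpose_diff transpose_mat matrix_mul_assoc)

lemma Bm_sym: "i < n \<Longrightarrow> transpose (Bm i) = Bm i"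
proof -
  assume i: "i < n"
  have "transpose (Bm i) = (\<integral>\<omega>. transpose (Phi i (T 0 i \<omega>)) \<partial>M)"
    unfolding Bm_eq[OF i, of 0] by (rule integral_bounded_linear[OF transpose_bl Phi_int[OF i], symmetric])
  also have "\<dots> = (\<integral>\<omega>. Phi i (T 0 i \<omega>) \<partial>M)"
    using Tsym_AE[OF i, of 0]
      measurable_compose[OF measurable_compose[OF T_meas[OF i, of 0] Phi_meas] transpose_meas]
      measurable_compose[OF T_meas[OF i, of 0] Phi_meas]
    by (intro integral_cong_AE) (auto simp: Phi_sym[OF _ i] elim!: AE_mp)
  finally show ?thesis using Bm_eq[OF i, of 0] by simp
qed

lemma Bm_nn: "i < n \<Longrightarrow> 0 \<le> u \<bullet> (Bm i *v u)"
proof -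
  assume i: "i < n"
  have "u \<bullet> (Bm i *v u) = (\<integral>\<omega>. u \<bullet> (Phi i (T 0 i \<omega>) *v u) \<partial>M)"
    unfolding Bm_eq[OF i, of 0] by (rule integral_bounded_linear[OF bl_form Phi_int[OF i], symmetric])
  also have "\<dots> \<ge> 0"
  proof (rule integral_nonneg_AE)
    show "AE \<omega> in M. 0 \<le> u \<bullet> (Phi i (T 0 i \<omega>) *v u)"
      using Tsym_AE[OF i, of 0]
    proof (rule AE_mp, intro AE_I2 impI)
      fix \<omega> assume s: "transpose (T 0 i \<omega>) = T 0 i \<omega>"
      let ?W = "(T 0 i \<omega> - mat 1) *v (D *v (msqrt (Ls i) *v u))"
      have "u \<bullet> (Phi i (T 0 i \<omega>) *v u) = (L *v ?W) \<bullet> ?W"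
        unfolding Phi_def by (rule phi_quad[OF s R_props(3)[OF i] Dsym])
      also have "\<dots> \<ge> 0" using L_psd by (simp add: psd_def inner_commute)
      finally show "0 \<le> u \<bullet> (Phi i (T 0 i \<omega>) *v u)" .
    qed
  qed
  finally show ?thesis .
qed

lemma lam_nn: "i < n \<Longrightarrow> 0 \<le> lam i"
  unfolding lam_def by (rule lambda_max_nonneg[OF Bm_sym Bm_nn])

lemma lam_le: "i < n \<Longrightarrow> lam i \<le> lamD"
  unfolding lamD_def by (rule Max_ge) auto

lemma lamD_nn: "0 \<le> lamD"
  using lam_nn[of 0] lam_le[of 0] n_pos by auto

end

context sgd begin

lemma T_cont_meas: "continuous_on UNIV h \<Longrightarrow> i < n \<Longrightarrow> (\<lambda>\<omega>. h (T k i \<omega>)) \<in> borel_measurable M"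
  by (rule borel_measurable_continuous_on[OF _ T_meas])

lemma smooth_grad_bound:
  assumes i: "i < n" and w: "Ls i *v w = g i y"
  shows "w \<bullet> g i y \<le> 2 * (fs i y - fsinf i)"
proof -
  have "fs i (y - w) \<le> fs i y + g i y \<bullet> ((y - w) - y) + 1/2 * ((Ls i *v ((y - w) - y)) \<bullet> ((y - w) - y))"
    using fi_smooth[OF i] unfolding matrix_smooth_def by blast
  also have "\<dots> = fs i y - 1/2 * (w \<bullet> g i y)"
    using w by (simp add: vec.neg inner_commute)
  finally have "fs i (y - w) \<le> fs i y - 1/2 * (w \<bullet> g i y)" .
  moreover have "fsinf i \<le> fs i (y - w)" by (rule fi_lb[OF i])
  ultimately show ?thesis by simp
qed

lemma diag_bound:
  assumes i: "i < n"
  shows "integrable M (\<lambda>\<omega>. (L *v ((T k i \<omega> - mat 1) *v (D *v g i y))) \<bullet> ((T k i \<omega> - mat 1) *v (D *v g i y)))"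
    and "(\<integral>\<omega>. (L *v ((T k i \<omega> - mat 1) *v (D *v g i y))) \<bullet> ((T k i \<omega> - mat 1) *v (D *v g i y)) \<partial>M)
           \<le> lam i * (2 * (fs i y - fsinf i))"
proof -
  let ?R = "msqrt (Ls i)"
  obtain w where w: "Ls i *v w = g i y" using pd_solve[OF Li_pd[OF i]] by blast
  define u where "u = ?R *v w"
  have Ru: "?R *v u = g i y" unfolding u_def using R_props(2)[OF i] w by (simp add: matrix_vector_mul_assoc)
  define q where "q = (\<lambda>A. (L *v ((A - mat 1) *v (D *v g i y))) \<bullet> ((A - mat 1) *v (D *v g i y)))"
  have qc: "continuous_on UNIV q" unfolding q_def by (intro continuous_intros)
  have pc: "continuous_on UNIV (\<lambda>A. u \<bullet> (Phi i A *v u))" unfolding Phi_def by (intro continuous_intros)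
  have AEeq: "AE \<omega> in M. q (T k i \<omega>) = u \<bullet> (Phi i (T k i \<omega>) *v u)"
    using Tsym_AE[OF i, of k]
  proof (rule AE_mp, intro AE_I2 impI)
    fix \<omega> assume s: "transpose (T k i \<omega>) = T k i \<omega>"
    show "q (T k i \<omega>) = u \<bullet> (Phi i (T k i \<omega>) *v u)"
      unfolding Phi_def q_def phi_quad[OF s R_props(3)[OF i] Dsym] Ru ..
  qed
  have ip: "integrable M (\<lambda>\<omega>. u \<bullet> (Phi i (T k i \<omega>) *v u))"
    by (rule integrable_bounded_linear[OF bl_form Phi_int[OF i]])
  have mq: "(\<lambda>\<omega>. q (T k i \<omega>)) \<in> borel_measurable M" by (rule T_cont_meas[OF qc i])
  have mp: "(\<lambda>\<omega>. u \<bullet> (Phi i (T k i \<omega>) *v u)) \<in> borel_measurable M" by (rule T_cont_meas[OF pc i])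
  have iq: "integrable M (\<lambda>\<omega>. q (T k i \<omega>))"
    using integrable_cong_AE[OF mq mp AEeq] ip by simp
  thus "integrable M (\<lambda>\<omega>. (L *v ((T k i \<omega> - mat 1) *v (D *v g i y))) \<bullet> ((T k i \<omega> - mat 1) *v (D *v g i y)))"
    unfolding q_def .
  have "(\<integral>\<omega>. q (T k i \<omega>) \<partial>M) = (\<integral>\<omega>. u \<bullet> (Phi i (T k i \<omega>) *v u) \<partial>M)"
    by (rule integral_cong_AE[OF mq mp AEeq])
  also have "\<dots> = u \<bullet> (Bm i *v u)"
    unfolding Bm_eq[OF i, of k] by (rule integral_bounded_linear[OF bl_form Phi_int[OF i]])
  also have "\<dots> \<le> lam i * (u \<bullet> u)" unfolding lam_def by (rule lambda_max_bound[OF Bm_sym[OF i]])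
  also have "u \<bullet> u = w \<bullet> g i y"
  proof -
    have "u \<bullet> u = (transpose ?R *v w) \<bullet> u" using R_props(3)[OF i] by (simp add: u_def)
    also have "\<dots> = w \<bullet> (?R *v u)" by (simp add: dot_transpose)
    finally show ?thesis using Ru by simp
  qed
  also have "lam i * (w \<bullet> g i y) \<le> lam i * (2 * (fs i y - fsinf i))"
    by (rule mult_left_mono[OF smooth_grad_bound[OF i w] lam_nn[OF i]])
  finally show "(\<integral>\<omega>. (L *v ((T k i \<omega> - mat 1) *v (D *v g i y))) \<bullet> ((T k i \<omega> - mat 1) *v (D *v g i y)) \<partial>M)
           \<le> lam i * (2 * (fs i y - fsinf i))" unfolding q_def .
qed

end

context sgd begin

definition "phi = (1 / real n) * (\<Sum>i<n. fsinf i)"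
definition "Bnd y = (f y - finf) + lamD / real n * (f y - phi) - 1/2 * (gradf y \<bullet> (D *v gradf y))"

lemma n_gt: "real n > 0" using n_pos by simp

lemma f_cont: "continuous_on UNIV f"
proof -
  have "continuous_on UNIV (fs i)" if "i < n" for i
    using grad[OF that] by (meson continuous_at_imp_continuous_on has_derivative_continuous)
  thus ?thesis unfolding f_def by (intro continuous_intros) auto
qed

lemma g_meas: "i < n \<Longrightarrow> g i \<in> borel_measurable borel"
  by (rule grad_measurable[OF grad])

lemma indep_pair:
  assumes "i < n" "j < n" "i \<noteq> j"
  shows "indep_var borel (T k i) borel (T k j)"
proof -
  have "indep_var (PiM {(k,i)} (\<lambda>_. borel)) (\<lambda>\<omega>. restrict (\<lambda>p. (\<lambda>(k, i). T k i) p \<omega>) {(k,i)})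
                  (PiM {(k,j)} (\<lambda>_. borel)) (\<lambda>\<omega>. restrict (\<lambda>p. (\<lambda>(k, i). T k i) p \<omega>) {(k,j)})"
    by (rule indep_var_restrict[OF T_indep]) (use assms in auto)
  from indep_var_compose[OF this measurable_component_singleton[of "(k,i)"] measurable_component_singleton[of "(k,j)"]]
  show ?thesis by (simp add: o_def)
qed

lemma DLD_bound: "(L *v (D *v v)) \<bullet> (D *v v) \<le> v \<bullet> (D *v v)"
proof -
  have "0 \<le> v \<bullet> ((D - D ** L ** D) *v v)" using DLD by (simp add: loewner_le_def psd_def)
  also have "\<dots> = v \<bullet> (D *v v) - v \<bullet> (D *v (L *v (D *v v)))"
    by (simp add: matrix_vector_mult_diff_rdistrib inner_diff_right matrix_vector_mul_assoc matrix_mul_assoc)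
  also have "v \<bullet> (D *v (L *v (D *v v))) = (D *v v) \<bullet> (L *v (D *v v))"
    using dot_transpose[of v D] Dsym by simp
  finally show ?thesis by (simp add: inner_commute)
qed

lemma inner_step:
  fixes y :: "real^'d" and k :: nat
  defines "s \<equiv> \<lambda>\<omega>. (1 / real n) *\<^sub>R (\<Sum>i<n. T k i \<omega> *v (D *v g i y))"
  shows "(\<integral>\<^sup>+\<omega>. ennreal (f (y - s \<omega>) - finf) \<partial>M) \<le> ennreal (Bnd y)" and "0 \<le> Bnd y"
proof -
  define gy where "gy = gradf y"
  define z where "z i = D *v g i y" for i
  define v where "v i \<omega> = (T k i \<omega> - mat 1) *v z i" for i \<omega>
  define m where "m = D *v gy"
  define e where "e \<omega> = (1 / real n) *\<^sub>R (\<Sum>i<n. v i \<omega>)" for \<omega>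
  define C0 where "C0 = (f y - finf) - gy \<bullet> m + 1/2 * ((L *v m) \<bullet> m)"
  define U where "U \<omega> = C0 - (1 / real n) * (\<Sum>i<n. gy \<bullet> v i \<omega>) + (1 / real n) * (\<Sum>i<n. (L *v m) \<bullet> v i \<omega>)
      + 1 / (2 * (real n)^2) * (\<Sum>i<n. \<Sum>j<n. (L *v v i \<omega>) \<bullet> v j \<omega>)" for \<omega>
  have m_eq: "m = (1 / real n) *\<^sub>R (\<Sum>i<n. z i)"
    by (simp add: m_def gy_def gradf_def z_def matrix_vector_mult_scaleR vec.sum)
  have s_eq: "s \<omega> = m + e \<omega>" for \<omega>
  proof -
    have "T k i \<omega> *v (D *v g i y) = z i + v i \<omega>" for i
      by (simp add: z_def v_def matrix_vector_mult_diff_rdistrib)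
    hence "(\<Sum>i<n. T k i \<omega> *v (D *v g i y)) = (\<Sum>i<n. z i) + (\<Sum>i<n. v i \<omega>)"
      by (simp add: sum.distrib)
    thus ?thesis by (simp add: s_def m_eq e_def scaleR_add_right)
  qed
  have pw: "f (y - s \<omega>) - finf \<le> U \<omega>" for \<omega>
  proof -
    have "f (y - s \<omega>) \<le> f y + gradf y \<bullet> ((y - s \<omega>) - y) + 1/2 * ((L *v ((y - s \<omega>) - y)) \<bullet> ((y - s \<omega>) - y))"
      using f_smooth unfolding matrix_smooth_def by blast
    also have "\<dots> = f y - gy \<bullet> s \<omega> + 1/2 * ((L *v s \<omega>) \<bullet> s \<omega>)"
      by (simp add: gy_def vec.neg)
    also have "gy \<bullet> s \<omega> = gy \<bullet> m + (1 / real n) * (\<Sum>i<n. gy \<bullet> v i \<omega>)"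
      by (simp add: s_eq e_def inner_add_right inner_sum_right)
    also have "(L *v s \<omega>) \<bullet> s \<omega> = (L *v m) \<bullet> m + 2 * ((L *v m) \<bullet> e \<omega>) + (L *v e \<omega>) \<bullet> e \<omega>"
      unfolding s_eq by (rule quad_expand[OF Lsym])
    also have "(L *v m) \<bullet> e \<omega> = (1 / real n) * (\<Sum>i<n. (L *v m) \<bullet> v i \<omega>)"
      by (simp add: e_def inner_sum_right)
    also have "(L *v e \<omega>) \<bullet> e \<omega> = (1 / real n)^2 * (\<Sum>i<n. \<Sum>j<n. (L *v v i \<omega>) \<bullet> v j \<omega>)"
      unfolding e_def by (rule sum_quad)
    finally show ?thesis
      by (simp add: U_def C0_def power2_eq_square field_simps)
  qed
  have hnn: "0 \<le> f (y - s \<omega>) - finf" for \<omega> using f_lb[of "y - s \<omega>"] by simp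
  have i1: "integrable M (\<lambda>\<omega>. a \<bullet> v i \<omega>)" and e1: "(\<integral>\<omega>. a \<bullet> v i \<omega> \<partial>M) = 0" if "i < n" for a i
    unfolding v_def using mean_zero_lin[OF prob T_int[OF that] T_mean[OF that]] by auto
  have i2: "integrable M (\<lambda>\<omega>. (L *v v i \<omega>) \<bullet> v j \<omega>)" if "i < n" "j < n" for i j
  proof (cases "i = j")
    case True thus ?thesis using diag_bound(1)[OF that(1), of k y] by (simp add: v_def z_def)
  next
    case False thus ?thesis
      using cross_zero(1)[OF prob indep_pair[OF that False] T_int[OF that(1)] T_mean[OF that(1)] T_int[OF that(2)] T_mean[OF that(2)]]
      by (simp add: v_def)
  qed
  have e2: "(\<integral>\<omega>. (L *v v i \<omega>) \<bullet> v j \<omega> \<partial>M) = 0" if "i < n" "j < n" "i \<noteq> j" for i j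
    using cross_zero(2)[OF prob indep_pair[OF that] T_int[OF that(1)] T_mean[OF that(1)] T_int[OF that(2)] T_mean[OF that(2)]]
    by (simp add: v_def)
  have d2: "(\<integral>\<omega>. (L *v v i \<omega>) \<bullet> v i \<omega> \<partial>M) \<le> lamD * (2 * (fs i y - fsinf i))" if "i < n" for i
  proof -
    have "(\<integral>\<omega>. (L *v v i \<omega>) \<bullet> v i \<omega> \<partial>M) \<le> lam i * (2 * (fs i y - fsinf i))"
      using diag_bound(2)[OF that, of k y] by (simp add: v_def z_def)
    also have "\<dots> \<le> lamD * (2 * (fs i y - fsinf i))"
      using lam_le[OF that] fi_lb[OF that, of y] by (intro mult_right_mono) auto
    finally show ?thesis .
  qed
  have iS1: "integrable M (\<lambda>\<omega>. \<Sum>i<n. a \<bullet> v i \<omega>)" for a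
    by (rule Bochner_Integration.integrable_sum) (simp add: i1)
  have eS1: "(\<integral>\<omega>. (\<Sum>i<n. a \<bullet> v i \<omega>) \<partial>M) = 0" for a
    by (subst Bochner_Integration.integral_sum) (simp_all add: i1 e1)
  have iS2: "integrable M (\<lambda>\<omega>. \<Sum>i<n. \<Sum>j<n. (L *v v i \<omega>) \<bullet> v j \<omega>)"
    by (intro Bochner_Integration.integrable_sum) (simp add: i2)
  have eS2: "(\<integral>\<omega>. (\<Sum>i<n. \<Sum>j<n. (L *v v i \<omega>) \<bullet> v j \<omega>) \<partial>M) = (\<Sum>i<n. \<integral>\<omega>. (L *v v i \<omega>) \<bullet> v i \<omega> \<partial>M)"
  proof -
    have "(\<integral>\<omega>. (\<Sum>i<n. \<Sum>j<n. (L *v v i \<omega>) \<bullet> v j \<omega>) \<partial>M) = (\<Sum>i<n. \<Sum>j<n. \<integral>\<omega>. (L *v v i \<omega>) \<bullet> v j \<omega> \<partial>M)"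
    proof -
      have ii: "integrable M (\<lambda>\<omega>. \<Sum>j<n. (L *v v i \<omega>) \<bullet> v j \<omega>)" if "i \<in> {..<n}" for i
        by (rule Bochner_Integration.integrable_sum) (use that i2 in simp)
      have "(\<integral>\<omega>. (\<Sum>i<n. \<Sum>j<n. (L *v v i \<omega>) \<bullet> v j \<omega>) \<partial>M) = (\<Sum>i<n. \<integral>\<omega>. (\<Sum>j<n. (L *v v i \<omega>) \<bullet> v j \<omega>) \<partial>M)"
        by (rule Bochner_Integration.integral_sum) (rule ii)
      also have "\<dots> = (\<Sum>i<n. \<Sum>j<n. \<integral>\<omega>. (L *v v i \<omega>) \<bullet> v j \<omega> \<partial>M)"
        by (rule sum.cong[OF refl], rule Bochner_Integration.integral_sum) (use i2 in simp)
      finally show ?thesis .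
    qed
    also have "\<dots> = (\<Sum>i<n. \<integral>\<omega>. (L *v v i \<omega>) \<bullet> v i \<omega> \<partial>M)"
    proof (rule sum.cong[OF refl])
      fix i assume i: "i \<in> {..<n}"
      have "(\<Sum>j<n. \<integral>\<omega>. (L *v v i \<omega>) \<bullet> v j \<omega> \<partial>M) = (\<Sum>j<n. if j = i then \<integral>\<omega>. (L *v v i \<omega>) \<bullet> v i \<omega> \<partial>M else 0)"
        by (rule sum.cong[OF refl]) (use i e2 in auto)
      also have "\<dots> = (\<integral>\<omega>. (L *v v i \<omega>) \<bullet> v i \<omega> \<partial>M)" using i by simp
      finally show "(\<Sum>j<n. \<integral>\<omega>. (L *v v i \<omega>) \<bullet> v j \<omega> \<partial>M) = (\<integral>\<omega>. (L *v v i \<omega>) \<bullet> v i \<omega> \<partial>M)" .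
    qed
    finally show ?thesis .
  qed
  have iU: "integrable M U"
    unfolding U_def[abs_def] using iS1 iS2 by simp
  have intU: "integral\<^sup>L M U = C0 + 1 / (2 * (real n)^2) * (\<Sum>i<n. \<integral>\<omega>. (L *v v i \<omega>) \<bullet> v i \<omega> \<partial>M)"
    unfolding U_def[abs_def] using iS1 iS2 eS1 eS2 by (simp add: prob_space)
  have "(\<Sum>i<n. \<integral>\<omega>. (L *v v i \<omega>) \<bullet> v i \<omega> \<partial>M) \<le> (\<Sum>i<n. lamD * (2 * (fs i y - fsinf i)))"
    by (rule sum_mono) (use d2 in simp)
  also have "\<dots> = (2 * lamD) * (\<Sum>i<n. fs i y - fsinf i)"
    by (subst sum_distrib_left) (simp add: algebra_simps)
  also have "(\<Sum>i<n. fs i y - fsinf i) = (\<Sum>i<n. fs i y) - (\<Sum>i<n. fsinf i)" by (rule sum_subtractf)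
  also have "(\<Sum>i<n. fs i y) = real n * f y" using n_gt by (simp add: f_def)
  also have "(\<Sum>i<n. fsinf i) = real n * phi" using n_gt by (simp add: phi_def)
  also have "2 * lamD * (real n * f y - real n * phi) = 2 * lamD * real n * (f y - phi)" by (simp add: algebra_simps)
  finally have sb: "(\<Sum>i<n. \<integral>\<omega>. (L *v v i \<omega>) \<bullet> v i \<omega> \<partial>M) \<le> 2 * lamD * real n * (f y - phi)" .
  have C0b: "C0 \<le> (f y - finf) - 1/2 * (gy \<bullet> (D *v gy))"
    using DLD_bound[of gy] by (simp add: C0_def m_def)
  have "integral\<^sup>L M U \<le> (f y - finf) - 1/2 * (gy \<bullet> (D *v gy)) + 1 / (2 * (real n)^2) * (2 * lamD * real n * (f y - phi))"
    unfolding intU using C0b sb n_gt by (intro add_mono mult_left_mono) auto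
  also have "\<dots> = Bnd y" using n_gt by (simp add: Bnd_def gy_def power2_eq_square field_simps)
  finally have UB: "integral\<^sup>L M U \<le> Bnd y" .
  have Unn: "0 \<le> U \<omega>" for \<omega> using pw[of \<omega>] hnn[of \<omega>] by linarith
  have "0 \<le> integral\<^sup>L M U" by (rule integral_nonneg_AE) (simp add: Unn)
  thus "0 \<le> Bnd y" using UB by linarith
  have "(\<integral>\<^sup>+\<omega>. ennreal (f (y - s \<omega>) - finf) \<partial>M) \<le> (\<integral>\<^sup>+\<omega>. ennreal (U \<omega>) \<partial>M)"
    by (rule nn_integral_mono) (simp add: pw ennreal_leI)
  also have "\<dots> = ennreal (integral\<^sup>L M U)"
    by (rule nn_integral_eq_integral[OF iU]) (simp add: Unn)
  also have "\<dots> \<le> ennreal (Bnd y)" by (rule ennreal_leI[OF UB])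
  finally show "(\<integral>\<^sup>+\<omega>. ennreal (f (y - s \<omega>) - finf) \<partial>M) \<le> ennreal (Bnd y)" .
qed

end

context sgd begin

primrec xs :: "nat \<Rightarrow> (nat \<times> nat \<Rightarrow> real^'d^'d) \<Rightarrow> real^'d" where
  "xs 0 t = x0"
| "xs (Suc k) t = xs k t - (1 / real n) *\<^sub>R (\<Sum>i<n. t (k, i) *v (D *v g i (xs k t)))"

definition "TT = (\<lambda>(k, i). T k i)"

lemma x_xs: "x k \<omega> = xs k (\<lambda>p. TT p \<omega>)"
  by (induction k) (simp_all add: x_0 x_Suc TT_def)

lemma xs_local: "(\<And>p. p \<in> {..<k} \<times> {..<n} \<Longrightarrow> t p = t' p) \<Longrightarrow> xs k t = xs k t'"
proof (induction k)
  case 0 thus ?case by simp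
next
  case (Suc k)
  have "xs k t = xs k t'" using Suc by auto
  moreover have "t (k, i) = t' (k, i)" if "i < n" for i using Suc.prems that by auto
  ultimately show ?case by simp
qed

lemma meas_step:
  assumes Y: "Y \<in> borel_measurable N" and tq: "\<And>i. i < n \<Longrightarrow> (\<lambda>w. q w i) \<in> borel_measurable N"
  shows "(\<lambda>w. Y w - (1 / real n) *\<^sub>R (\<Sum>i<n. q w i *v (D *v g i (Y w)))) \<in> borel_measurable N"
proof -
  have "(\<lambda>w. q w i *v (D *v g i (Y w))) \<in> borel_measurable N" if "i < n" for i
    by (intro meas_mulv tq[OF that] borel_measurable_const measurable_compose[OF Y g_meas[OF that]])
  hence "(\<lambda>w. \<Sum>i<n. q w i *v (D *v g i (Y w))) \<in> borel_measurable N"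
    by (intro borel_measurable_sum) auto
  thus ?thesis using Y by (intro borel_measurable_diff borel_measurable_scaleR borel_measurable_const)
qed

lemma xs_meas: "{..<k} \<times> {..<n} \<subseteq> A \<Longrightarrow> xs k \<in> borel_measurable (PiM A (\<lambda>_. borel))"
proof (induction k)
  case 0 thus ?case by simp
next
  case (Suc k)
  have "{..<k} \<times> {..<n} \<subseteq> A" using Suc.prems by force
  hence IH: "xs k \<in> borel_measurable (PiM A (\<lambda>_. borel))" by (rule Suc.IH)
  have comp: "(\<lambda>t. t (k, i)) \<in> borel_measurable (PiM A (\<lambda>_. borel))" if "i < n" for i
    using Suc.prems that by (intro measurable_component_singleton) auto
  have "(\<lambda>t. xs k t - (1 / real n) *\<^sub>R (\<Sum>i<n. t (k, i) *v (D *v g i (xs k t)))) \<in> borel_measurable (PiM A (\<lambda>_. borel))"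
    by (rule meas_step[OF IH, of "\<lambda>t i. t (k, i)"]) (rule comp)
  moreover have "xs (Suc k) = (\<lambda>t. xs k t - (1 / real n) *\<^sub>R (\<Sum>i<n. t (k, i) *v (D *v g i (xs k t))))"
    by (rule ext) simp
  ultimately show ?case by simp
qed

lemma x_meas: "x k \<in> borel_measurable M"
proof (induction k)
  case 0 thus ?case by (simp add: x_0)
next
  case (Suc k) thus ?case
    using meas_step[OF Suc, of "\<lambda>\<omega> i. T k i \<omega>"] T_meas by (simp add: x_Suc[abs_def])
qed

definition "Aset k = {..<k} \<times> {..<n}"
definition "Bset k = {k} \<times> {..<n}"
definition "Qk k \<omega> = restrict (\<lambda>p. TT p \<omega>) (Bset k)"

lemma x_restrict: "x k \<omega> = xs k (restrict (\<lambda>p. TT p \<omega>) (Aset k))"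
  unfolding x_xs by (rule xs_local) (simp add: Aset_def)

definition "Pk k \<omega> = restrict (\<lambda>p. TT p \<omega>) (Aset k)"

lemma indep_PQ: "indep_var (PiM (Aset k) (\<lambda>_. borel)) (Pk k) (PiM (Bset k) (\<lambda>_. borel)) (Qk k)"
  unfolding TT_def Pk_def[abs_def] Qk_def[abs_def]
  by (rule indep_var_restrict[OF T_indep]) (auto simp: Aset_def Bset_def)

lemma x_Pk: "x k \<omega> = xs k (Pk k \<omega>)"
  unfolding Pk_def by (rule x_restrict)

definition "H k z = ennreal (f (fst z - (1 / real n) *\<^sub>R (\<Sum>i<n. snd z (k, i) *v (D *v g i (fst z)))) - finf)"

lemma H_meas: "H k \<in> borel_measurable (borel \<Otimes>\<^sub>M PiM (Bset k) (\<lambda>_. borel))"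
proof -
  have c: "(\<lambda>z. snd z (k, i)) \<in> borel_measurable (borel \<Otimes>\<^sub>M PiM (Bset k) (\<lambda>_. borel))" if "i < n" for i
    using that by (intro measurable_compose[OF measurable_snd measurable_component_singleton]) (auto simp: Bset_def)
  have "(\<lambda>z. fst z - (1 / real n) *\<^sub>R (\<Sum>i<n. snd z (k, i) *v (D *v g i (fst z))))
          \<in> borel_measurable (borel \<Otimes>\<^sub>M PiM (Bset k) (\<lambda>_. borel))"
    by (rule meas_step[where Y=fst and q="\<lambda>z i. snd z (k, i)", OF measurable_fst]) (use c in auto)
  hence "(\<lambda>z. f (fst z - (1 / real n) *\<^sub>R (\<Sum>i<n. snd z (k, i) *v (D *v g i (fst z)))) - finf)
          \<in> borel_measurable (borel \<Otimes>\<^sub>M PiM (Bset k) (\<lambda>_. borel))"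
    by (rule borel_measurable_diff[OF borel_measurable_continuous_on[OF f_cont] borel_measurable_const])
  thus ?thesis unfolding H_def[abs_def] by measurable
qed

lemma Qk_meas: "Qk k \<in> measurable M (PiM (Bset k) (\<lambda>_. borel))"
  using indep_PQ by (rule indep_var_rv2)

lemma Pk_meas: "Pk k \<in> measurable M (PiM (Aset k) (\<lambda>_. borel))"
  using indep_PQ by (rule indep_var_rv1)

lemma xsk_meas: "xs k \<in> borel_measurable (PiM (Aset k) (\<lambda>_. borel))"
  by (rule xs_meas) (simp add: Aset_def)

lemma H'_meas: "(\<lambda>z. H k (xs k (fst z), snd z)) \<in> borel_measurable (PiM (Aset k) (\<lambda>_. borel) \<Otimes>\<^sub>M PiM (Bset k) (\<lambda>_. borel))"
proof -
  have "(\<lambda>z. (xs k (fst z), snd z)) \<in> measurable (PiM (Aset k) (\<lambda>_. borel) \<Otimes>\<^sub>M PiM (Bset k) (\<lambda>_. borel)) (borel \<Otimes>\<^sub>M PiM (Bset k) (\<lambda>_. borel))"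
    by (intro measurable_Pair measurable_compose[OF measurable_fst xsk_meas] measurable_snd)
  from measurable_compose[OF this H_meas] show ?thesis by simp
qed

lemma gradf_meas: "gradf \<in> borel_measurable borel"
  unfolding gradf_def by (intro borel_measurable_scaleR borel_measurable_const borel_measurable_sum g_meas) auto

lemma Bnd_meas: "Bnd \<in> borel_measurable borel"
  unfolding Bnd_def[abs_def]
  by (intro borel_measurable_add borel_measurable_diff borel_measurable_times borel_measurable_const
        borel_measurable_continuous_on[OF f_cont] measurable_id[unfolded id_def] borel_measurable_inner gradf_meas meas_mulv)

lemma outer_step:
  "(\<integral>\<^sup>+\<omega>. ennreal (f (x (Suc k) \<omega>) - finf) \<partial>M) \<le> (\<integral>\<^sup>+\<omega>. ennreal (Bnd (x k \<omega>)) \<partial>M)"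
proof -
  let ?PA = "PiM (Aset k) (\<lambda>_. borel)"
  let ?PB = "PiM (Bset k) (\<lambda>_. borel)"
  let ?H = "\<lambda>z. H k (xs k (fst z), snd z)"
  have sf: "sigma_finite_measure (distr M ?PB (Qk k))"
    by (rule prob_space_imp_sigma_finite, rule prob_space_distr[OF Qk_meas])
  have eq1: "ennreal (f (x (Suc k) \<omega>) - finf) = ?H (Pk k \<omega>, Qk k \<omega>)" for \<omega>
    by (simp add: H_def x_Suc Qk_def Bset_def TT_def x_Pk[symmetric])
  have "(\<integral>\<^sup>+\<omega>. ennreal (f (x (Suc k) \<omega>) - finf) \<partial>M) = (\<integral>\<^sup>+\<omega>. ?H (Pk k \<omega>, Qk k \<omega>) \<partial>M)"
    by (simp only: eq1)
  also have "\<dots> = (\<integral>\<^sup>+z. ?H z \<partial>distr M (?PA \<Otimes>\<^sub>M ?PB) (\<lambda>\<omega>. (Pk k \<omega>, Qk k \<omega>)))"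
    by (rule nn_integral_distr[symmetric]) (auto intro: measurable_Pair Pk_meas Qk_meas H'_meas)
  also have "distr M (?PA \<Otimes>\<^sub>M ?PB) (\<lambda>\<omega>. (Pk k \<omega>, Qk k \<omega>)) = distr M ?PA (Pk k) \<Otimes>\<^sub>M distr M ?PB (Qk k)"
    using indep_PQ[of k] by (simp add: indep_var_distribution_eq)
  also have "(\<integral>\<^sup>+z. ?H z \<partial>(distr M ?PA (Pk k) \<Otimes>\<^sub>M distr M ?PB (Qk k)))
      = (\<integral>\<^sup>+p. \<integral>\<^sup>+q. ?H (p, q) \<partial>distr M ?PB (Qk k) \<partial>distr M ?PA (Pk k))"
  proof (rule sigma_finite_measure.nn_integral_fst[OF sf, symmetric])
    have "sets (distr M ?PA (Pk k) \<Otimes>\<^sub>M distr M ?PB (Qk k)) = sets (?PA \<Otimes>\<^sub>M ?PB)"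
      by (intro sets_pair_measure_cong) simp_all
    thus "?H \<in> borel_measurable (distr M ?PA (Pk k) \<Otimes>\<^sub>M distr M ?PB (Qk k))"
      using H'_meas measurable_cong_sets[OF _ refl] by blast
  qed
  also have "\<dots> \<le> (\<integral>\<^sup>+p. ennreal (Bnd (xs k p)) \<partial>distr M ?PA (Pk k))"
  proof (rule nn_integral_mono)
    fix p
    let ?y = "xs k p"
    have "(\<integral>\<^sup>+q. ?H (p, q) \<partial>distr M ?PB (Qk k)) = (\<integral>\<^sup>+\<omega>. H k (?y, Qk k \<omega>) \<partial>M)"
      by (simp, rule nn_integral_distr[OF Qk_meas]) (simp add: measurable_Pair2[OF H_meas])
    also have "\<dots> = (\<integral>\<^sup>+\<omega>. ennreal (f (?y - (1 / real n) *\<^sub>R (\<Sum>i<n. T k i \<omega> *v (D *v g i ?y))) - finf) \<partial>M)"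
      by (simp add: H_def Qk_def Bset_def TT_def)
    also have "\<dots> \<le> ennreal (Bnd ?y)" by (rule inner_step(1))
    finally show "(\<integral>\<^sup>+q. ?H (p, q) \<partial>distr M ?PB (Qk k)) \<le> ennreal (Bnd (xs k p))" .
  qed
  also have "\<dots> = (\<integral>\<^sup>+\<omega>. ennreal (Bnd (xs k (Pk k \<omega>))) \<partial>M)"
    by (rule nn_integral_distr[OF Pk_meas])
       (simp add: measurable_compose[OF measurable_compose[OF xsk_meas Bnd_meas] measurable_ennreal])
  also have "\<dots> = (\<integral>\<^sup>+\<omega>. ennreal (Bnd (x k \<omega>)) \<partial>M)" by (simp add: x_Pk)
  finally show ?thesis .
qed

end

lemma final_arith:
  fixes \<delta> t :: "nat \<Rightarrow> real" and a c \<epsilon> \<Delta> :: real and K :: nat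
  assumes a0: "0 \<le> a" and aK: "a * real K \<le> 1" and K1: "K \<ge> 1" and c0: "c > 0" and e0: "\<epsilon> > 0"
    and dnn: "\<And>k. 0 \<le> \<delta> k"
    and rec: "\<And>k. \<delta> (Suc k) + c / 2 * t k \<le> (1 + a) * \<delta> k + a * \<Delta>"
    and h1: "a * \<Delta> \<le> \<epsilon>\<^sup>2 * c / 4"
    and h2: "real K \<ge> 12 * \<delta> 0 / (c * \<epsilon>\<^sup>2)"
  shows "Min (t ` {0..<K}) \<le> \<epsilon>\<^sup>2"
proof (rule ccontr)
  assume "\<not> Min (t ` {0..<K}) \<le> \<epsilon>\<^sup>2"
  hence mgt: "Min (t ` {0..<K}) > \<epsilon>\<^sup>2" by simp
  define m where "m = Min (t ` {0..<K})"
  have mle: "m \<le> t k" if "k < K" for k unfolding m_def using that by (intro Min_le) auto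
  define w where "w k = 1 / (1 + a) ^ Suc k" for k
  have wpos: "w k > 0" for k using a0 by (simp add: w_def)
  have tele: "(\<Sum>k<N. w k * (c / 2 * t k)) + \<delta> N / (1 + a) ^ N \<le> \<delta> 0 + a * \<Delta> * (\<Sum>k<N. w k)" for N
  proof (induction N)
    case 0 thus ?case by simp
  next
    case (Suc N)
    have p: "(1 + a) ^ Suc N > 0" using a0 by simp
    have "w N * (\<delta> (Suc N) + c / 2 * t N) \<le> w N * ((1 + a) * \<delta> N + a * \<Delta>)"
      by (rule mult_left_mono[OF rec]) (use wpos[of N] in simp)
    moreover have "w N * ((1 + a) * \<delta> N) = \<delta> N / (1 + a) ^ N"
    proof -
      have "1 + a \<noteq> 0" using a0 by simp
      thus ?thesis by (simp add: w_def)
    qed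
    moreover have "w N * \<delta> (Suc N) = \<delta> (Suc N) / (1 + a) ^ Suc N" by (simp add: w_def)
    ultimately have "\<delta> (Suc N) / (1 + a) ^ Suc N + w N * (c / 2 * t N) \<le> \<delta> N / (1 + a) ^ N + w N * (a * \<Delta>)"
      by (simp add: algebra_simps)
    thus ?case using Suc.IH by (simp add: algebra_simps)
  qed
  define W where "W = (\<Sum>k<K. w k)"
  have "(1 + a) ^ K \<le> exp a ^ K" using a0 by (intro power_mono exp_ge_add_one_self) auto
  also have "\<dots> = exp (a * real K)" by (simp add: exp_of_nat_mult[symmetric] mult.commute)
  also have "\<dots> \<le> exp 1" using aK by simp
  also have "\<dots> \<le> 3" by (rule exp_le)
  finally have pK: "(1 + a) ^ K \<le> 3" .
  have wK: "w k \<ge> 1 / 3" if "k < K" for k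
  proof -
    have "(1 + a) ^ Suc k \<le> (1 + a) ^ K" using a0 that by (intro power_increasing) auto
    hence "(1 + a) ^ Suc k \<le> 3" using pK by simp
    moreover have "(1 + a) ^ Suc k > 0" using a0 by simp
    ultimately show ?thesis by (simp add: w_def field_simps)
  qed
  have WK: "W \<ge> real K / 3"
  proof -
    have "(\<Sum>k<K. (1::real) / 3) \<le> W" unfolding W_def by (rule sum_mono) (use wK in simp)
    thus ?thesis by simp
  qed
  have "c / 2 * m * W = (\<Sum>k<K. w k * (c / 2 * m))" by (simp add: W_def sum_distrib_left algebra_simps)
  also have "\<dots> \<le> (\<Sum>k<K. w k * (c / 2 * t k))"
    by (rule sum_mono) (use wpos mle c0 in \<open>auto intro!: mult_left_mono\<close>)
  also have "\<dots> \<le> \<delta> 0 + a * \<Delta> * W - \<delta> K / (1 + a) ^ K" using tele[of K] by (simp add: W_def)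
  also have "\<dots> \<le> \<delta> 0 + a * \<Delta> * W" using dnn[of K] a0 by simp
  finally have main: "c / 2 * m * W \<le> \<delta> 0 + a * \<Delta> * W" .
  have Wpos: "W > 0" using WK K1 by simp
  have "c / 2 * \<epsilon>\<^sup>2 * W < c / 2 * m * W"
    using mgt c0 Wpos unfolding m_def by (intro mult_strict_right_mono mult_strict_left_mono) auto
  also have "\<dots> \<le> \<delta> 0 + \<epsilon>\<^sup>2 * c / 4 * W" using main h1 Wpos by (smt (verit) mult_right_mono)
  finally have "c / 4 * \<epsilon>\<^sup>2 * W < \<delta> 0" by (simp add: algebra_simps)
  moreover have "\<delta> 0 \<le> real K * (c * \<epsilon>\<^sup>2) / 12"
    using h2 c0 e0 by (simp add: divide_le_eq field_simps)
  moreover have "real K * (c * \<epsilon>\<^sup>2) / 12 \<le> c / 4 * \<epsilon>\<^sup>2 * W"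
    using WK c0 e0 by (simp add: field_simps)
  ultimately show False by simp
qed

context sgd begin

definition "Gq y = gradf y \<bullet> (D *v gradf y)"

lemma Gq_nn: "0 \<le> Gq y"
  using D_pd unfolding pd_def Gq_def by (cases "gradf y = 0") (auto intro: less_imp_le)

lemma f_ge_phi: "phi \<le> f y"
proof -
  have "(\<Sum>i<n. fsinf i) \<le> (\<Sum>i<n. fs i y)" by (rule sum_mono) (simp add: fi_lb)
  thus ?thesis using n_gt by (simp add: f_def phi_def divide_right_mono)
qed

lemma fx_meas: "(\<lambda>\<omega>. f (x k \<omega>) - finf) \<in> borel_measurable M"
  by (intro borel_measurable_diff borel_measurable_const borel_measurable_continuous_on[OF f_cont x_meas])

lemma Gx_meas: "(\<lambda>\<omega>. Gq (x k \<omega>)) \<in> borel_measurable M"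
  unfolding Gq_def
  by (intro borel_measurable_inner meas_mulv borel_measurable_const measurable_compose[OF x_meas gradf_meas])

lemma step_k:
  assumes iG: "integrable M (\<lambda>\<omega>. Gq (x k \<omega>))" and iF: "integrable M (\<lambda>\<omega>. f (x k \<omega>) - finf)"
  shows "integrable M (\<lambda>\<omega>. f (x (Suc k) \<omega>) - finf)"
    and "(\<integral>\<omega>. f (x (Suc k) \<omega>) - finf \<partial>M) + 1/2 * (\<integral>\<omega>. Gq (x k \<omega>) \<partial>M)
          \<le> (1 + lamD / real n) * (\<integral>\<omega>. f (x k \<omega>) - finf \<partial>M) + lamD / real n * (finf - phi)"
proof -
  define a where "a = lamD / real n"
  have a0: "0 \<le> a" using lamD_nn n_gt by (simp add: a_def)
  define R where "R \<omega> = (f (x k \<omega>) - finf) + a * (f (x k \<omega>) - phi)" for \<omega>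
  have Rnn: "0 \<le> R \<omega>" for \<omega> using f_lb[of "x k \<omega>"] f_ge_phi[of "x k \<omega>"] a0 by (simp add: R_def)
  have Req: "R \<omega> = (1 + a) * (f (x k \<omega>) - finf) + a * (finf - phi)" for \<omega> by (simp add: R_def algebra_simps)
  have iR: "integrable M R" unfolding Req[abs_def] using iF by simp
  have intR: "integral\<^sup>L M R = (1 + a) * (\<integral>\<omega>. f (x k \<omega>) - finf \<partial>M) + a * (finf - phi)"
    unfolding Req[abs_def] using iF by (simp add: prob_space)
  have Bsum: "Bnd (x k \<omega>) + 1/2 * Gq (x k \<omega>) = R \<omega>" for \<omega> by (simp add: Bnd_def Gq_def R_def a_def)
  have Bnn: "0 \<le> Bnd (x k \<omega>)" for \<omega> by (rule inner_step(2))
  have Bm: "(\<lambda>\<omega>. Bnd (x k \<omega>)) \<in> borel_measurable M" by (rule measurable_compose[OF x_meas Bnd_meas])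
  have "(\<integral>\<^sup>+\<omega>. ennreal (f (x (Suc k) \<omega>) - finf) \<partial>M) + (\<integral>\<^sup>+\<omega>. ennreal (1/2 * Gq (x k \<omega>)) \<partial>M)
        \<le> (\<integral>\<^sup>+\<omega>. ennreal (Bnd (x k \<omega>)) \<partial>M) + (\<integral>\<^sup>+\<omega>. ennreal (1/2 * Gq (x k \<omega>)) \<partial>M)"
    by (intro add_right_mono outer_step)
  also have "\<dots> = (\<integral>\<^sup>+\<omega>. ennreal (Bnd (x k \<omega>)) + ennreal (1/2 * Gq (x k \<omega>)) \<partial>M)"
    by (rule nn_integral_add[symmetric]) (use Bm Gx_meas in auto)
  also have "\<dots> = (\<integral>\<^sup>+\<omega>. ennreal (R \<omega>) \<partial>M)"
    by (rule nn_integral_cong) (simp add: Bsum[symmetric] Bnn Gq_nn ennreal_plus)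
  also have "\<dots> = ennreal (integral\<^sup>L M R)" by (rule nn_integral_eq_integral[OF iR]) (simp add: Rnn)
  finally have key: "(\<integral>\<^sup>+\<omega>. ennreal (f (x (Suc k) \<omega>) - finf) \<partial>M) + (\<integral>\<^sup>+\<omega>. ennreal (1/2 * Gq (x k \<omega>)) \<partial>M)
        \<le> ennreal (integral\<^sup>L M R)" .
  hence "(\<integral>\<^sup>+\<omega>. ennreal (f (x (Suc k) \<omega>) - finf) \<partial>M) < \<infinity>"
    by (metis (no_types, lifting) ennreal_less_top le_iff_add linorder_not_le order_le_less_trans top.not_eq_extremum add_top infinity_ennreal_def ennreal_add_eq_top order.strict_trans1)
  thus iF1: "integrable M (\<lambda>\<omega>. f (x (Suc k) \<omega>) - finf)"
    by (intro integrableI_nonneg fx_meas) (simp_all add: f_lb)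
  have e1: "(\<integral>\<^sup>+\<omega>. ennreal (f (x (Suc k) \<omega>) - finf) \<partial>M) = ennreal (\<integral>\<omega>. f (x (Suc k) \<omega>) - finf \<partial>M)"
    by (rule nn_integral_eq_integral[OF iF1]) (simp add: f_lb)
  have iG2: "integrable M (\<lambda>\<omega>. 1/2 * Gq (x k \<omega>))" using iG by simp
  have e2: "(\<integral>\<^sup>+\<omega>. ennreal (1/2 * Gq (x k \<omega>)) \<partial>M) = ennreal (\<integral>\<omega>. 1/2 * Gq (x k \<omega>) \<partial>M)"
    by (rule nn_integral_eq_integral[OF iG2]) (simp add: Gq_nn)
  have n1: "0 \<le> (\<integral>\<omega>. f (x (Suc k) \<omega>) - finf \<partial>M)" by (rule integral_nonneg_AE) (simp add: f_lb)
  have n2: "0 \<le> (\<integral>\<omega>. 1/2 * Gq (x k \<omega>) \<partial>M)" by (rule integral_nonneg_AE) (simp add: Gq_nn)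
  have n3: "0 \<le> integral\<^sup>L M R" by (rule integral_nonneg_AE) (simp add: Rnn)
  from key[unfolded e1 e2] n1 n2 n3
  have "(\<integral>\<omega>. f (x (Suc k) \<omega>) - finf \<partial>M) + (\<integral>\<omega>. 1/2 * Gq (x k \<omega>) \<partial>M) \<le> integral\<^sup>L M R"
    by (simp add: ennreal_plus[symmetric] del: ennreal_plus)
  thus "(\<integral>\<omega>. f (x (Suc k) \<omega>) - finf \<partial>M) + 1/2 * (\<integral>\<omega>. Gq (x k \<omega>) \<partial>M)
          \<le> (1 + lamD / real n) * (\<integral>\<omega>. f (x k \<omega>) - finf \<partial>M) + lamD / real n * (finf - phi)"
    using intR by (simp add: a_def)
qed

lemma all_steps:
  assumes iG: "\<And>k. integrable M (\<lambda>\<omega>. Gq (x k \<omega>))"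
  shows "integrable M (\<lambda>\<omega>. f (x k \<omega>) - finf)"
proof (induction k)
  case 0 thus ?case by (simp add: x_0)
next
  case (Suc k) thus ?case by (rule step_k(1)[OF iG])
qed

end

theorem corollary3:
  fixes n :: nat and K :: nat
    and fs :: "nat \<Rightarrow> real^'d \<Rightarrow> real" and g :: "nat \<Rightarrow> real^'d \<Rightarrow> real^'d"
    and f :: "real^'d \<Rightarrow> real"
    and finf :: real and fsinf :: "nat \<Rightarrow> real"
    and Ls :: "nat \<Rightarrow> real^'d^'d" and L D :: "real^'d^'d"
    and M :: "'a measure" and \<mu> :: "(real^'d^'d) measure"
    and T :: "nat \<Rightarrow> nat \<Rightarrow> 'a \<Rightarrow> real^'d^'d"
    and x :: "nat \<Rightarrow> 'a \<Rightarrow> real^'d" and x0 :: "real^'d"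
    and \<epsilon> :: real and c :: real and gradf :: "real^'d \<Rightarrow> real^'d"
    and Deltainf lamD :: real
  defines "c \<equiv> det D powr (1 / real CARD('d))"
      and "gradf \<equiv> (\<lambda>y. (1 / real n) *\<^sub>R (\<Sum>i<n. g i y))"
      and "Deltainf \<equiv> finf - (1 / real n) * (\<Sum>i<n. fsinf i)"
      and "lamD \<equiv> Max ((\<lambda>i. lambda_max (integral\<^sup>L \<mu> (\<lambda>A.
                 msqrt (Ls i) ** D ** (A - mat 1) ** L ** (A - mat 1) ** D ** msqrt (Ls i)))) ` {..<n})"
  assumes n_pos: "n \<ge> 1"
    and f_def: "f = (\<lambda>y. (1 / real n) * (\<Sum>i<n. fs i y))"
    and grad: "\<And>i y. i < n \<Longrightarrow> (fs i has_derivative (\<lambda>h. g i y \<bullet> h)) (at y)"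
    and fi_lb: "\<And>i y. i < n \<Longrightarrow> fsinf i \<le> fs i y"
    and Li_pd: "\<And>i. i < n \<Longrightarrow> pd (Ls i)"
    and fi_smooth: "\<And>i. i < n \<Longrightarrow> matrix_smooth (Ls i) (fs i) (g i)"
    and f_lb: "\<And>y. finf \<le> f y"
    and L_psd: "psd L"
    and f_smooth: "matrix_smooth L f gradf"
    and prob: "prob_space M"
    and T_meas: "\<And>k i. i < n \<Longrightarrow> T k i \<in> borel_measurable M"
    and T_indep: "prob_space.indep_vars M (\<lambda>_. borel) (\<lambda>(k, i). T k i) (UNIV \<times> {..<n})"
    and T_distr: "\<And>k i. i < n \<Longrightarrow> distr M borel (T k i) = \<mu>"
    and T_psd: "\<And>k i. i < n \<Longrightarrow> AE \<omega> in M. psd (T k i \<omega>)"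
    and T_int: "\<And>k i. i < n \<Longrightarrow> integrable M (T k i)"
    and T_mean: "\<And>k i. i < n \<Longrightarrow> integral\<^sup>L M (T k i) = mat 1"
    and D_pd: "pd D"
    and x_0: "\<And>\<omega>. x 0 \<omega> = x0"
    and x_Suc: "\<And>k \<omega>. x (Suc k) \<omega> =
         x k \<omega> - (1 / real n) *\<^sub>R (\<Sum>i<n. T k i \<omega> *v (D *v g i (x k \<omega>)))"
    and int_lam: "\<And>i. i < n \<Longrightarrow> integrable \<mu> (\<lambda>A.
                 msqrt (Ls i) ** D ** (A - mat 1) ** L ** (A - mat 1) ** D ** msqrt (Ls i))"
    and int_norm: "\<And>k. integrable M (\<lambda>\<omega>. ((inverse c *\<^sub>R D) *v gradf (x k \<omega>)) \<bullet> gradf (x k \<omega>))"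
    and eps_pos: "\<epsilon> > 0"
    and K_pos: "K \<ge> 1"
    and DLD: "loewner_le (D ** L ** D) D"
    and lam_K: "lamD \<le> real n / real K"
    and lam_Delta: "4 * Deltainf * lamD \<le> real n * \<epsilon>\<^sup>2 * c"
    and K_large: "real K \<ge> 12 * (f x0 - finf) / (c * \<epsilon>\<^sup>2)"
  shows "Min ((\<lambda>k. integral\<^sup>L M (\<lambda>\<omega>. ((inverse c *\<^sub>R D) *v gradf (x k \<omega>)) \<bullet> gradf (x k \<omega>)))
              ` {0..<K}) \<le> \<epsilon>\<^sup>2"
proof -
  interpret S: sgd n fs g f finf fsinf Ls L D M \<mu> T x x0 gradf
    using n_pos f_def gradf_def[THEN meta_eq_to_obj_eq] grad fi_lb Li_pd fi_smooth f_lb L_psd f_smooth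
          prob T_meas T_indep T_distr T_psd T_int T_mean D_pd x_0 x_Suc int_lam DLD
    by (rule sgd.intro)
  have c0: "c > 0" unfolding c_def using pd_det_pos[OF D_pd] by simp
  have lamD_eq: "lamD = S.lamD"
    unfolding lamD_def S.lamD_def S.lam_def S.Bm_def S.Phi_def[abs_def] ..
  have Delta_eq: "Deltainf = finf - S.phi" unfolding Deltainf_def S.phi_def ..
  define t where "t k = integral\<^sup>L M (\<lambda>\<omega>. ((inverse c *\<^sub>R D) *v gradf (x k \<omega>)) \<bullet> gradf (x k \<omega>))" for k
  define \<delta> where "\<delta> k = (\<integral>\<omega>. f (x k \<omega>) - finf \<partial>M)" for k
  have teq: "((inverse c *\<^sub>R D) *v gradf (x k \<omega>)) \<bullet> gradf (x k \<omega>) = inverse c * S.Gq (x k \<omega>)" for k \<omega>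
    by (simp add: S.Gq_def scaleR_matrix_vector_assoc[symmetric] inner_commute)
  have Geq: "S.Gq (x k \<omega>) = c * (((inverse c *\<^sub>R D) *v gradf (x k \<omega>)) \<bullet> gradf (x k \<omega>))" for k \<omega>
    using c0 by (simp add: teq)
  have iG: "integrable M (\<lambda>\<omega>. S.Gq (x k \<omega>))" for k
    unfolding Geq using int_norm[of k] by simp
  have intG: "(\<integral>\<omega>. S.Gq (x k \<omega>) \<partial>M) = c * t k" for k
    unfolding Geq t_def by simp
  have a0: "0 \<le> S.lamD / real n" using S.lamD_nn by simp
  have rec: "\<delta> (Suc k) + c / 2 * t k \<le> (1 + S.lamD / real n) * \<delta> k + S.lamD / real n * (finf - S.phi)" for k
    using S.step_k(2)[where k=k, OF iG S.all_steps[OF iG]] intG[of k] unfolding \<delta>_def by (simp add: algebra_simps)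
  have dnn: "0 \<le> \<delta> k" for k unfolding \<delta>_def by (rule integral_nonneg_AE) (simp add: f_lb)
  have Kpos: "real K > 0" using K_pos by simp
  have aK: "S.lamD / real n * real K \<le> 1"
    using lam_K S.n_gt Kpos unfolding lamD_eq by (simp add: field_simps)
  have h1: "S.lamD / real n * (finf - S.phi) \<le> \<epsilon>\<^sup>2 * c / 4"
    using lam_Delta S.n_gt unfolding lamD_eq Delta_eq by (simp add: field_simps)
  have d0: "\<delta> 0 = f x0 - finf" unfolding \<delta>_def by (simp add: x_0 S.prob_space)
  have "Min (t ` {0..<K}) \<le> \<epsilon>\<^sup>2"
    by (rule final_arith[where \<delta>=\<delta> and t=t and a="S.lamD / real n" and c=c and \<Delta>="finf - S.phi" and \<epsilon>=\<epsilon> and K=K,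
          OF a0 aK K_pos c0 eps_pos dnn rec h1]) (use K_large d0 in simp)
  thus ?thesis unfolding t_def .
qed

end
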